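(* Assume the van Kampen setup below, with compatible future retracts $Q_k:\vec\pi_1(X_k)\to\vec\pi_1(X_k,B_k)$ and compatible future retracts $P_k:\vec\pi_1(X_k,B_k)\to\vec\pi_1(X_k,A_k)$ ($k=0,1,2$), and let $P:\vec\pi_1(X,B)\to\vec\pi_1(X,A)$ be the unique functor with $P\circ j_k=j'_k\circ P_k$ ($k=1,2$). For $x\in B$ let $\eta_x:x\to P(x)$ be the image in $\vec\pi_1(X,B)$ of the unit $\eta^k_x$ of $P_k$ for any $k\in\{1,2\}$ with $x\in B_k$ (this does not depend on $k$). Then for every morphism $[\gamma]:x\to y$ of $\vec\pi_1(X,B)$ one has $\eta_y\circ[\gamma]=P([\gamma])\circ\eta_x$ in $\vec\pi_1(X,B)$.
   Context: A d-space is a topological space with a set of continuous paths $[0,1]\to X$ (dipaths) containing all constant paths, closed under precomposition with continuous non-decreasing maps $[0,1]\to[0,1]$ and under concatenation; subsets carry the dipaths with image in them. The fundamental category $\vec\pi_1(X)$ has objects the points of $X$ and morphisms $a\to b$ the classes of dipaths from $a$ to $b$ modulo the equivalence relation generated by endpoint-fixing directed homotopies; composition is concatenation. For $A\subseteq X$, $\vec\pi_1(X,A)$ is the full subcategory on objects in $A$. For $A\subseteq B\subseteq X$ with inclusion $\iota:\vec\pi_1(X,A)\to\vec\pi_1(X,B)$, a future retract is a functor $P:\vec\pi_1(X,B)\to\vec\pi_1(X,A)$ left adjoint to $\iota$ whose unit satisfies $\eta_a=\mathrm{id}_a$ for $a\in A$. Van Kampen setup: $X$ a d-space, $X_1,X_2\subseteq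 X$ with $X=\mathrm{Int}(X_1)\cup\mathrm{Int}(X_2)$, dipaths of $X$ the finite concatenations of dipaths of $X_1$ and $X_2$, $X_0=X_1\cap X_2$. For $k=0,1,2$, $A_k\subseteq B_k\subseteq X_k$ with $A_0=A_1\cap A_2$, $B_0=B_1\cap B_2$, $A=A_1\cup A_2$, $B=B_1\cup B_2$, $A=\mathrm{Int}_A(A_1)\cup\mathrm{Int}_A(A_2)$, $B=\mathrm{Int}_B(B_1)\cup\mathrm{Int}_B(B_2)$. Inclusion-induced functors: $i_k:\vec\pi_1(X_0,B_0)\to\vec\pi_1(X_k,B_k)$, $j_k:\vec\pi_1(X_k,B_k)\to\vec\pi_1(X,B)$, $i'_k:\vec\pi_1(X_0,A_0)\to\vec\pi_1(X_k,A_k)$, $j'_k:\vec\pi_1(X_k,A_k)\to\vec\pi_1(X,A)$ ($k=1,2$). Compatible future retracts $Q_k:\vec\pi_1(X_k)\to\vec\pi_1(X_k,B_k)$: each a future retract with unit $\theta^k$, commuting with the inclusion-induced functors from index $0$ to $k=1,2$, with $\theta^0_x$ mapping to $\theta^k_x$ for $x\in X_0$. Compatible future retracts $P_k:\vec\pi_1(X_k,B_k)\to\vec\pi_1(X_k,A_k)$: each a future retract with unit $\eta^k$, $P_k\circ i_k=i'_k\circ P_0$ ($k=1,2$), and $\eta^0_x$ mapping to $\eta^k_x$ for $x\in B_0$. *)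

theory Defs
  imports "HOL-Analysis.Analysis"
begin

text \<open>Paths are functions real => 'a; only their values on [0,1] matter.
  A d-space is a topology X together with a predicate d selecting the dipaths.\<close>

definition dconcat :: "(real \<Rightarrow> 'a) \<Rightarrow> (real \<Rightarrow> 'a) \<Rightarrow> real \<Rightarrow> 'a" where
  "dconcat p q = (\<lambda>t. if t \<le> 1/2 then p (2 * t) else q (2 * t - 1))"

definition dspace :: "'a topology \<Rightarrow> ((real \<Rightarrow> 'a) \<Rightarrow> bool) \<Rightarrow> bool" where
  "dspace X d \<longleftrightarrow>
     (\<forall>p. d p \<longrightarrow> continuous_map (top_of_set {0..1::real}) X p) \<and>
     (\<forall>x\<in>topspace X. d (\<lambda>t. x)) \<and>
     (\<forall>p \<phi>. d p \<and> continuous_on {0..1} \<phi> \<and> \<phi> ` {0..1} \<subseteq> {0..1::real} \<and> mono_on {0..1} \<phi>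
            \<longrightarrow> d (p \<circ> \<phi>)) \<and>
     (\<forall>p q. d p \<and> d q \<and> p 1 = q 0 \<longrightarrow> d (dconcat p q)) \<and>
     (\<forall>p q. d p \<and> (\<forall>t\<in>{0..1}. q t = p t) \<longrightarrow> d q)"

definition dipath :: "((real \<Rightarrow> 'a) \<Rightarrow> bool) \<Rightarrow> 'a set \<Rightarrow> (real \<Rightarrow> 'a) \<Rightarrow> bool" where
  "dipath d S p \<longleftrightarrow> d p \<and> p ` {0..1} \<subseteq> S"

text \<open>Endpoint-fixing directed homotopy (d-homotopy) from p to q in the subspace S:
  a d-map H from the directed square (dipaths = pairs of continuous non-decreasing maps)
  into S, with H(-,0) = p, H(-,1) = q, and fixed endpoints.\<close>
definition dhomotopic :: "'a topology \<Rightarrow> ((real \<Rightarrow> 'a) \<Rightarrow> bool) \<Rightarrow> 'a set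
     \<Rightarrow> (real \<Rightarrow> 'a) \<Rightarrow> (real \<Rightarrow> 'a) \<Rightarrow> bool" where
  "dhomotopic X d S p q \<longleftrightarrow> (\<exists>H :: real \<Rightarrow> real \<Rightarrow> 'a.
     continuous_map (top_of_set ({0..1} \<times> {0..1::real})) (subtopology X S) (\<lambda>(t, s). H t s) \<and>
     (\<forall>u v. continuous_on {0..1} u \<and> continuous_on {0..1} v \<and>
            u ` {0..1} \<subseteq> {0..1::real} \<and> v ` {0..1} \<subseteq> {0..1::real} \<and>
            mono_on {0..1} u \<and> mono_on {0..1} v
            \<longrightarrow> dipath d S (\<lambda>t. H (u t) (v t))) \<and>
     (\<forall>t\<in>{0..1}. H t 0 = p t \<and> H t 1 = q t) \<and>
     (\<forall>s\<in>{0..1}. H 0 s = p 0 \<and> H 1 s = p 1))"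

definition dclass :: "'a topology \<Rightarrow> ((real \<Rightarrow> 'a) \<Rightarrow> bool) \<Rightarrow> 'a set
     \<Rightarrow> (real \<Rightarrow> 'a) \<Rightarrow> (real \<Rightarrow> 'a) set" where
  "dclass X d S p = {q. dipath d S q \<and> q 0 = p 0 \<and> q 1 = p 1 \<and> equivclp (dhomotopic X d S) p q}"

definition dmor :: "'a topology \<Rightarrow> ((real \<Rightarrow> 'a) \<Rightarrow> bool) \<Rightarrow> 'a set
     \<Rightarrow> 'a \<Rightarrow> 'a \<Rightarrow> (real \<Rightarrow> 'a) set \<Rightarrow> bool" where
  "dmor X d S a b f \<longleftrightarrow> (\<exists>p. dipath d S p \<and> p 0 = a \<and> p 1 = b \<and> f = dclass X d S p)"

text \<open>Composition g o f (first f, then g): class of the concatenation.\<close>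
definition dcomp :: "'a topology \<Rightarrow> ((real \<Rightarrow> 'a) \<Rightarrow> bool) \<Rightarrow> 'a set
     \<Rightarrow> (real \<Rightarrow> 'a) set \<Rightarrow> (real \<Rightarrow> 'a) set \<Rightarrow> (real \<Rightarrow> 'a) set" where
  "dcomp X d S g f = (\<Union>p\<in>f. \<Union>q\<in>g. dclass X d S (dconcat p q))"

definition did :: "'a topology \<Rightarrow> ((real \<Rightarrow> 'a) \<Rightarrow> bool) \<Rightarrow> 'a set \<Rightarrow> 'a \<Rightarrow> (real \<Rightarrow> 'a) set" where
  "did X d S a = dclass X d S (\<lambda>t. a)"

definition dincl :: "'a topology \<Rightarrow> ((real \<Rightarrow> 'a) \<Rightarrow> bool) \<Rightarrow> 'a set
     \<Rightarrow> (real \<Rightarrow> 'a) set \<Rightarrow> (real \<Rightarrow> 'a) set" where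
  "dincl X d Y f = (\<Union>p\<in>f. dclass X d Y p)"

text \<open>(Fo, Fm) is a functor from the fundamental category of S1 restricted to objects T1
  (i.e. pi_1(S1, T1)) to pi_1(S2, T2).\<close>
definition dfunctor :: "'a topology \<Rightarrow> ((real \<Rightarrow> 'a) \<Rightarrow> bool) \<Rightarrow> 'a set \<Rightarrow> 'a set \<Rightarrow> 'a set \<Rightarrow> 'a set
     \<Rightarrow> ('a \<Rightarrow> 'a) \<Rightarrow> ((real \<Rightarrow> 'a) set \<Rightarrow> (real \<Rightarrow> 'a) set) \<Rightarrow> bool" where
  "dfunctor X d S1 T1 S2 T2 Fo Fm \<longleftrightarrow>
     (\<forall>x\<in>T1. Fo x \<in> T2) \<and>
     (\<forall>x\<in>T1. \<forall>y\<in>T1. \<forall>f. dmor X d S1 x y f \<longrightarrow> dmor X d S2 (Fo x) (Fo y) (Fm f)) \<and>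
     (\<forall>x\<in>T1. Fm (did X d S1 x) = did X d S2 (Fo x)) \<and>
     (\<forall>x\<in>T1. \<forall>y\<in>T1. \<forall>z\<in>T1. \<forall>f g. dmor X d S1 x y f \<and> dmor X d S1 y z g
        \<longrightarrow> Fm (dcomp X d S1 g f) = dcomp X d S2 (Fm g) (Fm f))"

text \<open>Future retract: (Po, Pm) : pi_1(S, B) -> pi_1(S, A) is left adjoint to the inclusion
  pi_1(S, A) -> pi_1(S, B), with unit eta (a natural transformation id -> iota P whose
  components are universal arrows to the inclusion), and eta a = id for a in A.\<close>
definition future_retract :: "'a topology \<Rightarrow> ((real \<Rightarrow> 'a) \<Rightarrow> bool) \<Rightarrow> 'a set \<Rightarrow> 'a set \<Rightarrow> 'a set
     \<Rightarrow> ('a \<Rightarrow> 'a) \<Rightarrow> ((real \<Rightarrow> 'a) set \<Rightarrow> (real \<Rightarrow> 'a) set) \<Rightarrow> ('a \<Rightarrow> (real \<Rightarrow> 'a) set) \<Rightarrow> bool" where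
  "future_retract X d S A B Po Pm eta \<longleftrightarrow>
     A \<subseteq> B \<and> B \<subseteq> S \<and>
     dfunctor X d S B S A Po Pm \<and>
     (\<forall>x\<in>B. dmor X d S x (Po x) (eta x)) \<and>
     (\<forall>x\<in>B. \<forall>y\<in>B. \<forall>f. dmor X d S x y f
        \<longrightarrow> dcomp X d S (eta y) f = dcomp X d S (Pm f) (eta x)) \<and>
     (\<forall>x\<in>B. \<forall>a\<in>A. \<forall>g. dmor X d S x a g
        \<longrightarrow> (\<exists>!h. dmor X d S (Po x) a h \<and> dcomp X d S h (eta x) = g)) \<and>
     (\<forall>a\<in>A. eta a = did X d S a)"

end

theory Submission
  imports Defs
begin

lemma dspace_cont: "dspace X d \<Longrightarrow> d p \<Longrightarrow> continuous_map (top_of_set {0..1}) X p"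
  unfolding dspace_def by (elim conjE) (erule allE[where x=p], erule mp)
lemma dspace_const: "dspace X d \<Longrightarrow> x \<in> topspace X \<Longrightarrow> d (\<lambda>t. x)"
  unfolding dspace_def by (elim conjE) (erule ballE[where x=x], assumption, simp)
lemma dspace_comp: "dspace X d \<Longrightarrow> d p \<Longrightarrow> continuous_on {0..1} \<phi> \<Longrightarrow> \<phi> ` {0..1} \<subseteq> {0..1} \<Longrightarrow> mono_on {0..1} \<phi> \<Longrightarrow> d (p \<circ> \<phi>)"
  unfolding dspace_def by (elim conjE) (erule allE[where x=p], erule allE[where x=\<phi>], erule mp, simp)
lemma dspace_concat: "dspace X d \<Longrightarrow> d p \<Longrightarrow> d q \<Longrightarrow> p 1 = q 0 \<Longrightarrow> d (dconcat p q)"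
  unfolding dspace_def by (elim conjE) (erule allE[where x=p], erule allE[where x=q], erule mp, simp)
lemma dspace_eq: "dspace X d \<Longrightarrow> d p \<Longrightarrow> (\<And>t. t \<in> {0..1} \<Longrightarrow> q t = p t) \<Longrightarrow> d q"
  unfolding dspace_def by (elim conjE) (erule allE[where x=p], erule allE[where x=q], erule mp, simp)



definition rp :: "(real \<Rightarrow> real) \<Rightarrow> bool" where
  "rp f \<longleftrightarrow> continuous_on {0..1} f \<and> f ` {0..1} \<subseteq> {0..1} \<and> mono_on {0..1} f"

lemma conv01: "a \<in> {0..1} \<Longrightarrow> b \<in> {0..1} \<Longrightarrow> s \<in> {0..1::real} \<Longrightarrow> (1-s)*a + s*b \<in> {0..1}"
proof -
  assume a: "a \<in> {0..1}" and b: "b \<in> {0..1}" and s: "s \<in> {0..1::real}"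
  have "(1-s)*a \<le> (1-s)*1" using a s by (intro mult_left_mono) auto
  moreover have "s*b \<le> s*1" using b s by (intro mult_left_mono) auto
  moreover have "0 \<le> (1-s)*a" "0 \<le> s*b" using a b s by auto
  ultimately show ?thesis by auto
qed

lemma conv_mono:
  fixes a a' b b' s s' :: real
  assumes "a \<le> a'" "b \<le> b'" "a' \<le> b'" "0 \<le> s" "s \<le> s'" "s \<le> 1"
  shows "(1-s)*a + s*b \<le> (1-s')*a' + s'*b'"
proof -
  have "(1-s)*a \<le> (1-s)*a'" using assms by (intro mult_left_mono) auto
  moreover have "s*b \<le> s*b'" using assms by (intro mult_left_mono) auto
  moreover have "(s'-s)*a' \<le> (s'-s)*b'" using assms by (intro mult_left_mono) auto
  ultimately show ?thesis by (simp add: algebra_simps)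
qed

lemma rp_fst: "rp f \<Longrightarrow> continuous_on ({0..1}\<times>{0..1}) (\<lambda>z. f (fst z))"
  unfolding rp_def
  apply (elim conjE)
  apply (rule continuous_on_compose2[of "{0..1}" f _ fst])
    apply assumption
   apply (rule continuous_on_fst[OF continuous_on_id])
  apply auto
  done

lemma rp_in: "rp f \<Longrightarrow> t \<in> {0..1} \<Longrightarrow> f t \<in> {0..1}"
  unfolding rp_def by blast
lemma rp_mono: "rp f \<Longrightarrow> r \<in> {0..1} \<Longrightarrow> s \<in> {0..1} \<Longrightarrow> r \<le> s \<Longrightarrow> f r \<le> f s"
  unfolding rp_def by (metis mono_onD)
lemma rp_cont: "rp f \<Longrightarrow> continuous_on {0..1} f"
  unfolding rp_def by blast

lemma rp_comp: "rp f \<Longrightarrow> rp g \<Longrightarrow> rp (\<lambda>t. f (g t))"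
proof -
  assume f: "rp f" and g: "rp g"
  have c: "continuous_on {0..1} (\<lambda>t. f (g t))"
    using continuous_on_compose2[of "{0..1}" f "{0..1}" g] f g by (simp add: rp_def)
  have i: "(\<lambda>t. f (g t)) ` {0..1} \<subseteq> {0..1}" using f g unfolding rp_def by blast
  have m: "mono_on {0..1} (\<lambda>t. f (g t))"
  proof (rule mono_onI)
    fix r s :: real assume "r \<in> {0..1}" "s \<in> {0..1}" "r \<le> s"
    moreover have "g r \<in> {0..1}" "g s \<in> {0..1}" using g \<open>r \<in> {0..1}\<close> \<open>s \<in> {0..1}\<close> unfolding rp_def by blast+
    ultimately show "f (g r) \<le> f (g s)" using f g unfolding rp_def by (metis mono_onD)
  qed
  show ?thesis using c i m by (simp add: rp_def)
qed

lemma dipath_comp: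
  assumes "dspace X d" "dipath d S p" "rp f"
  shows "dipath d S (\<lambda>t. p (f t))"
proof -
  have "d (p \<circ> f)" using assms(3) unfolding rp_def by (intro dspace_comp[OF assms(1)]) (use assms(2) dipath_def in auto)
  moreover have "(\<lambda>t. p (f t)) ` {0..1} \<subseteq> S" using assms(2,3) unfolding dipath_def rp_def by blast
  ultimately show ?thesis unfolding dipath_def by (simp add: o_def)
qed

lemma dipath_cont:
  assumes "dspace X d" "dipath d S p"
  shows "continuous_map (top_of_set {0..1}) (subtopology X S) p"
proof -
  have "continuous_map (top_of_set {0..1}) X p" using dspace_cont[OF assms(1)] assms(2) unfolding dipath_def by blast
  moreover have "p \<in> topspace (top_of_set {0..1}) \<rightarrow> S" using assms(2) unfolding dipath_def by auto
  ultimately show ?thesis by (simp add: continuous_map_in_subtopology)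
qed

lemma reparam_homot:
  assumes dsp: "dspace X d" and p: "dipath d S p" and rps: "rp \<psi>" "rp \<phi>"
    and le: "\<And>t. t \<in> {0..1} \<Longrightarrow> \<psi> t \<le> \<phi> t" and e0: "\<psi> 0 = \<phi> 0" and e1: "\<psi> 1 = \<phi> 1"
  shows "dhomotopic X d S (\<lambda>t. p (\<psi> t)) (\<lambda>t. p (\<phi> t))"
  unfolding dhomotopic_def
proof (intro exI[of _ "\<lambda>t s. p ((1-s)*\<psi> t + s*\<phi> t)"] conjI allI impI ballI)
  let ?k = "\<lambda>z::real\<times>real. (1 - snd z)*\<psi> (fst z) + snd z * \<phi> (fst z)"
  have "continuous_on ({0..1}\<times>{0..1}) ?k"
    using rp_fst[OF rps(1)] rp_fst[OF rps(2)]
    by (intro continuous_on_add continuous_on_mult continuous_on_diff continuous_on_const continuous_on_snd continuous_on_id)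
  moreover have "?k \<in> ({0..1}\<times>{0..1}) \<rightarrow> {0..1}"
  proof
    fix z :: "real \<times> real" assume z: "z \<in> {0..1}\<times>{0..1}"
    then have "fst z \<in> {0..1}" "snd z \<in> {0..1}" by (auto simp: mem_Times_iff)
    then show "?k z \<in> {0..1}" by (intro conv01 rp_in[OF rps(1)] rp_in[OF rps(2)])
  qed
  ultimately have "continuous_map (top_of_set ({0..1}\<times>{0..1})) (top_of_set {0..1}) ?k"
    by simp
  from continuous_map_compose[OF this dipath_cont[OF dsp p]]
  show "continuous_map (top_of_set ({0..1} \<times> {0..1})) (subtopology X S)
     (\<lambda>(t, s). p ((1 - s) * \<psi> t + s * \<phi> t))"
    by (simp add: o_def case_prod_unfold)
next
  fix u v :: "real \<Rightarrow> real"
  assume a: "continuous_on {0..1} u \<and> continuous_on {0..1} v \<and>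
       u ` {0..1} \<subseteq> {0..1} \<and> v ` {0..1} \<subseteq> {0..1} \<and> mono_on {0..1} u \<and> mono_on {0..1} v"
  hence ru: "rp u" and rv: "rp v" by (auto simp: rp_def)
  have "rp (\<lambda>t. (1 - v t)*\<psi> (u t) + v t*\<phi> (u t))"
    unfolding rp_def
  proof (intro conjI)
    show "continuous_on {0..1} (\<lambda>t. (1 - v t) * \<psi> (u t) + v t * \<phi> (u t))"
      using rp_cont[OF rp_comp[OF rps(1) ru]] rp_cont[OF rp_comp[OF rps(2) ru]] rp_cont[OF rv]
      by (intro continuous_on_add continuous_on_mult continuous_on_diff continuous_on_const)
    show "(\<lambda>t. (1 - v t) * \<psi> (u t) + v t * \<phi> (u t)) ` {0..1} \<subseteq> {0..1}"
    proof (rule image_subsetI)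
      fix t :: real assume "t \<in> {0..1}"
      then show "(1 - v t) * \<psi> (u t) + v t * \<phi> (u t) \<in> {0..1}"
        by (intro conv01 rp_in[OF rps(1)] rp_in[OF rps(2)] rp_in[OF ru] rp_in[OF rv])
    qed
    show "mono_on {0..1} (\<lambda>t. (1 - v t) * \<psi> (u t) + v t * \<phi> (u t))"
    proof (rule mono_onI)
      fix r s :: real assume rs: "r \<in> {0..1}" "s \<in> {0..1}" "r \<le> s"
      have u: "u r \<in> {0..1}" "u s \<in> {0..1}" "u r \<le> u s" using rp_in[OF ru] rp_mono[OF ru] rs
        by auto
      have v: "v r \<in> {0..1}" "v s \<in> {0..1}" "v r \<le> v s" using rp_in[OF rv] rp_mono[OF rv] rs
        by auto
      show "(1 - v r) * \<psi> (u r) + v r * \<phi> (u r) \<le> (1 - v s) * \<psi> (u s) + v s * \<phi> (u s)"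
      proof (rule conv_mono)
        show "\<psi> (u r) \<le> \<psi> (u s)" using rp_mono[OF rps(1)] u by blast
        show "\<phi> (u r) \<le> \<phi> (u s)" using rp_mono[OF rps(2)] u by blast
        show "\<psi> (u s) \<le> \<phi> (u s)" using le u by blast
      qed (use v in auto)
    qed
  qed
  from dipath_comp[OF dsp p this]
  show "dipath d S (\<lambda>t. p ((1 - v t) * \<psi> (u t) + v t * \<phi> (u t)))" .
next
  fix t :: real
  show "p ((1 - 0) * \<psi> t + 0 * \<phi> t) = p (\<psi> t)" by simp
  show "p ((1 - 1) * \<psi> t + 1 * \<phi> t) = p (\<phi> t)" by simp
next
  fix s :: real
  show "p ((1 - s) * \<psi> 0 + s * \<phi> 0) = p (\<psi> 0)" using e0 by (simp add: algebra_simps)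
  show "p ((1 - s) * \<psi> 1 + s * \<phi> 1) = p (\<psi> 1)" using e1 by (simp add: algebra_simps)
qed

lemma rp_id: "rp (\<lambda>t. t)"
  unfolding rp_def by (auto intro: continuous_on_id mono_onI)

lemma rp_const: "c \<in> {0..1} \<Longrightarrow> rp (\<lambda>t. c)"
  unfolding rp_def by (auto intro: continuous_on_const mono_onI)

lemma rp_lin: "0 \<le> a \<Longrightarrow> a \<le> b \<Longrightarrow> b \<le> (1::real) \<Longrightarrow> rp (\<lambda>t. a + (b-a)*t)"
  unfolding rp_def
proof (intro conjI)
  assume h: "0 \<le> a" "a \<le> b" "b \<le> (1::real)"
  show "continuous_on {0..1} (\<lambda>t. a + (b - a) * t)"
    by (intro continuous_on_add continuous_on_mult continuous_on_const continuous_on_id)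
  show "(\<lambda>t. a + (b - a) * t) ` {0..1} \<subseteq> {0..1}"
  proof (rule image_subsetI)
    fix t :: real assume t: "t \<in> {0..1}"
    have "(b-a)*t \<le> (b-a)*1" using t h by (intro mult_left_mono) auto
    moreover have "0 \<le> (b-a)*t" using t h by auto
    ultimately show "a + (b - a) * t \<in> {0..1}" using h by auto
  qed
  show "mono_on {0..1} (\<lambda>t. a + (b - a) * t)"
    by (rule mono_onI) (use h in \<open>auto intro: mult_left_mono\<close>)
qed

lemma rp_scale: "rp f \<Longrightarrow> 0 \<le> a \<Longrightarrow> (\<And>t. t \<in> {0..1} \<Longrightarrow> a * f t + b \<in> {0..1}) \<Longrightarrow> rp (\<lambda>t. a * f t + b)"
  unfolding rp_def
proof (intro conjI)
  assume f: "continuous_on {0..1} f \<and> f ` {0..1} \<subseteq> {0..1} \<and> mono_on {0..1} f"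
    and a: "0 \<le> a" and r: "\<And>t. t \<in> {0..1} \<Longrightarrow> a * f t + b \<in> {0..1}"
  show "continuous_on {0..1} (\<lambda>t. a * f t + b)"
    using f by (intro continuous_on_add continuous_on_mult continuous_on_const) auto
  show "(\<lambda>t. a * f t + b) ` {0..1} \<subseteq> {0..1}" using r by blast
  show "mono_on {0..1} (\<lambda>t. a * f t + b)"
  proof (rule mono_onI)
    fix r s :: real assume "r \<in> {0..1}" "s \<in> {0..1}" "r \<le> s"
    then have "f r \<le> f s" using f by (metis mono_onD)
    then show "a * f r + b \<le> a * f s + b" using a by (simp add: mult_left_mono)
  qed
qed

lemma rp_max: "rp f \<Longrightarrow> rp g \<Longrightarrow> rp (\<lambda>t. max (f t) (g t))"
proof -
  assume f: "rp f" and g: "rp g"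
  show ?thesis unfolding rp_def
  proof (intro conjI)
    show "continuous_on {0..1} (\<lambda>t. max (f t) (g t))"
      using rp_cont[OF f] rp_cont[OF g] by (rule continuous_on_max)
    show "(\<lambda>t. max (f t) (g t)) ` {0..1} \<subseteq> {0..1}"
      using rp_in[OF f] rp_in[OF g] by (auto simp: max_def)
    show "mono_on {0..1} (\<lambda>t. max (f t) (g t))"
    proof (rule mono_onI)
      fix r s :: real assume "r \<in> {0..1}" "s \<in> {0..1}" "r \<le> s"
      then have "f r \<le> f s" "g r \<le> g s" using rp_mono[OF f] rp_mono[OF g] by blast+
      then show "max (f r) (g r) \<le> max (f s) (g s)" by (rule max.mono)
    qed
  qed
qed

lemma dipath_eqI: "dspace X d \<Longrightarrow> dipath d S p \<Longrightarrow> (\<And>t. t \<in> {0..1} \<Longrightarrow> q t = p t) \<Longrightarrow> dipath d S q"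
  unfolding dipath_def using dspace_eq[of X d p q] by auto

lemma dhomotopicI:
  assumes "continuous_map (top_of_set ({0..1} \<times> {0..1::real})) (subtopology X S) (\<lambda>(t, s). H t s)"
    and "\<And>u v. rp u \<Longrightarrow> rp v \<Longrightarrow> dipath d S (\<lambda>t. H (u t) (v t))"
    and "\<And>t. t \<in> {0..1} \<Longrightarrow> H t 0 = p t" "\<And>t. t \<in> {0..1} \<Longrightarrow> H t 1 = q t"
    and "\<And>s. s \<in> {0..1} \<Longrightarrow> H 0 s = p 0" "\<And>s. s \<in> {0..1} \<Longrightarrow> H 1 s = p 1"
  shows "dhomotopic X d S p q"
  unfolding dhomotopic_def
proof (rule exI[of _ H], intro conjI allI impI ballI)
  fix u v :: "real \<Rightarrow> real"
  assume "continuous_on {0..1} u \<and> continuous_on {0..1} v \<and> u ` {0..1} \<subseteq> {0..1} \<and> v ` {0..1} \<subseteq> {0..1} \<and> mono_on {0..1} u \<and> mono_on {0..1} v"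
  then have "rp u" "rp v" unfolding rp_def by blast+
  then show "dipath d S (\<lambda>t. H (u t) (v t))" by (rule assms(2))
qed (use assms in auto)

lemma dhomotopicE:
  assumes "dhomotopic X d S p q"
  obtains H where "continuous_map (top_of_set ({0..1} \<times> {0..1::real})) (subtopology X S) (\<lambda>(t, s). H t s)"
    and "\<And>u v. rp u \<Longrightarrow> rp v \<Longrightarrow> dipath d S (\<lambda>t. H (u t) (v t))"
    and "\<And>t. t \<in> {0..1} \<Longrightarrow> H t 0 = p t" "\<And>t. t \<in> {0..1} \<Longrightarrow> H t 1 = q t"
    and "\<And>s. s \<in> {0..1} \<Longrightarrow> H 0 s = p 0" "\<And>s. s \<in> {0..1} \<Longrightarrow> H 1 s = p 1"
proof -
  from assms obtain H where H: "continuous_map (top_of_set ({0..1} \<times> {0..1::real})) (subtopology X S) (\<lambda>(t, s). H t s)"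
    "\<forall>u v. continuous_on {0..1} u \<and> continuous_on {0..1} v \<and> u ` {0..1} \<subseteq> {0..1} \<and> v ` {0..1} \<subseteq> {0..1} \<and> mono_on {0..1} u \<and> mono_on {0..1} v \<longrightarrow> dipath d S (\<lambda>t. H (u t) (v t))"
    "\<forall>t\<in>{0..1}. H t 0 = p t \<and> H t 1 = q t" "\<forall>s\<in>{0..1}. H 0 s = p 0 \<and> H 1 s = p 1"
    unfolding dhomotopic_def by blast
  have "\<And>u v. rp u \<Longrightarrow> rp v \<Longrightarrow> dipath d S (\<lambda>t. H (u t) (v t))"
    using H(2) unfolding rp_def by blast
  then show ?thesis using that H(1,3,4) by blast
qed

lemma dhomot_props:
  assumes dsp: "dspace X d" and h: "dhomotopic X d S p q"
  shows "dipath d S p" "dipath d S q" "q 0 = p 0" "q 1 = p 1"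
proof -
  obtain H where H0: "continuous_map (top_of_set ({0..1} \<times> {0..1::real})) (subtopology X S) (\<lambda>(t, s). H t s)"
    and H: "\<And>u v. rp u \<Longrightarrow> rp v \<Longrightarrow> dipath d S (\<lambda>t. H (u t) (v t))"
    "\<And>t. t \<in> {0..1} \<Longrightarrow> H t 0 = p t" "\<And>t. t \<in> {0..1} \<Longrightarrow> H t 1 = q t"
    "\<And>s. s \<in> {0..1} \<Longrightarrow> H 0 s = p 0" "\<And>s. s \<in> {0..1} \<Longrightarrow> H 1 s = p 1"
    by (rule dhomotopicE[OF h]) blast
  have "dipath d S (\<lambda>t. H t 0)" using H(1)[OF rp_id rp_const[of 0]] by simp
  then show "dipath d S p" by (rule dipath_eqI[OF dsp]) (simp add: H(2))
  have "dipath d S (\<lambda>t. H t 1)" using H(1)[OF rp_id rp_const[of 1]] by simp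
  then show "dipath d S q" by (rule dipath_eqI[OF dsp]) (simp add: H(3))
  show "q 0 = p 0" using H(3)[of 0] H(4)[of 1] by simp
  show "q 1 = p 1" using H(3)[of 1] H(5)[of 1] by simp
qed

lemma dhomot_refl:
  assumes dsp: "dspace X d" and p: "dipath d S p"
  shows "dhomotopic X d S p p"
proof (rule dhomotopicI[where H="\<lambda>t s. p t"])
  have "continuous_map (top_of_set ({0..1} \<times> {0..1::real})) (top_of_set {0..1}) fst"
    by (simp add: continuous_on_fst[OF continuous_on_id] mem_Times_iff)
  from continuous_map_compose[OF this dipath_cont[OF dsp p]]
  show "continuous_map (top_of_set ({0..1} \<times> {0..1::real})) (subtopology X S) (\<lambda>(t, s). p t)"
    by (simp add: o_def case_prod_unfold)
  fix u v :: "real \<Rightarrow> real" assume u: "rp u" "rp v"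
  show "dipath d S (\<lambda>t. p (u t))" by (rule dipath_comp[OF dsp p u(1)])
qed auto

lemma reparam_equiv:
  assumes dsp: "dspace X d" and p: "dipath d S p" and rps: "rp \<psi>" "rp \<phi>"
    and e0: "\<psi> 0 = \<phi> 0" and e1: "\<psi> 1 = \<phi> 1"
  shows "equivclp (dhomotopic X d S) (\<lambda>t. p (\<psi> t)) (\<lambda>t. p (\<phi> t))"
proof -
  let ?m = "\<lambda>t. max (\<psi> t) (\<phi> t)"
  have m: "rp ?m" by (rule rp_max[OF rps])
  have 1: "dhomotopic X d S (\<lambda>t. p (\<psi> t)) (\<lambda>t. p (?m t))"
    by (rule reparam_homot[OF dsp p rps(1) m]) (use e0 e1 in auto)
  have 2: "dhomotopic X d S (\<lambda>t. p (\<phi> t)) (\<lambda>t. p (?m t))"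
    by (rule reparam_homot[OF dsp p rps(2) m]) (use e0 e1 in auto)
  show ?thesis using r_into_equivclp[of "dhomotopic X d S", OF 1] converse_r_into_equivclp[of "dhomotopic X d S", OF 2] by (rule equivclp_trans)
qed

lemma dclass_mem: "q \<in> dclass X d S p \<Longrightarrow> dipath d S q \<and> q 0 = p 0 \<and> q 1 = p 1 \<and> equivclp (dhomotopic X d S) p q"
  unfolding dclass_def by blast

lemma dclass_self: "dipath d S p \<Longrightarrow> p \<in> dclass X d S p"
  unfolding dclass_def by auto

lemma dclass_mem_eq: "q \<in> dclass X d S p \<Longrightarrow> dclass X d S q = dclass X d S p"
proof -
  assume q: "q \<in> dclass X d S p"
  then have e: "q 0 = p 0" "q 1 = p 1" "equivclp (dhomotopic X d S) p q" unfolding dclass_def by auto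
  have "equivclp (dhomotopic X d S) q r = equivclp (dhomotopic X d S) p r" for r
    using e(3) equivclp_trans[of "dhomotopic X d S"] equivclp_sym[of "dhomotopic X d S"] by blast
  then show ?thesis unfolding dclass_def using e by auto
qed

lemma dclass_eqI:
  assumes "dipath d S a" "dipath d S b" "a 0 = b 0" "a 1 = b 1" "equivclp (dhomotopic X d S) a b"
  shows "dclass X d S a = dclass X d S b"
proof -
  have "b \<in> dclass X d S a" using assms unfolding dclass_def by auto
  from dclass_mem_eq[OF this] show ?thesis by simp
qed

lemma reparam_class:
  assumes dsp: "dspace X d" and p: "dipath d S p" and rps: "rp \<psi>" "rp \<phi>"
    and e0: "\<psi> 0 = \<phi> 0" and e1: "\<psi> 1 = \<phi> 1"
  shows "dclass X d S (\<lambda>t. p (\<psi> t)) = dclass X d S (\<lambda>t. p (\<phi> t))"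
  by (rule dclass_eqI[OF dipath_comp[OF dsp p rps(1)] dipath_comp[OF dsp p rps(2)]])
     (use e0 e1 reparam_equiv[OF assms] in auto)

lemma psi_facts:
  fixes c t :: real assumes c: "0 < c" "c < 1"
  shows "t \<le> c \<Longrightarrow> 0 \<le> t \<Longrightarrow> 0 \<le> t/(2*c) \<and> t/(2*c) \<le> 1/2"
    and "c < t \<Longrightarrow> t \<le> 1 \<Longrightarrow> 0 < (t-c)/(2*(1-c)) \<and> (t-c)/(2*(1-c)) \<le> 1/2"
    and "c * (2 * (t / (2 * c))) = t"
    and "c + (1 - c) * (2 * (1/2 + (t-c)/(2*(1-c))) - 1) = t"
proof -
  show "t \<le> c \<Longrightarrow> 0 \<le> t/(2*c) \<and> t/(2*c) \<le> 1/2" if "0 \<le> t"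
    using c that by (simp add: divide_le_eq)
  show "c < t \<Longrightarrow> t \<le> 1 \<Longrightarrow> 0 < (t-c)/(2*(1-c)) \<and> (t-c)/(2*(1-c)) \<le> 1/2"
    using c by (simp add: divide_le_eq)
  show "c * (2 * (t / (2 * c))) = t" using c by simp
  show "c + (1 - c) * (2 * (1/2 + (t-c)/(2*(1-c))) - 1) = t" using c by (simp add: field_simps)
qed

lemma glue:
  assumes dsp: "dspace X d" and c: "0 \<le> c" "c \<le> 1"
    and a: "d (\<lambda>t. r (c*t))" and b: "d (\<lambda>t. r (c + (1-c)*t))"
  shows "d r"
proof (cases "c = 0 \<or> c = 1")
  case True
  then show ?thesis using a b by auto
next
  case False
  then have c': "0 < c" "c < 1" using c by auto
  define A where "A = (\<lambda>t. r (c*t))"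
  define B where "B = (\<lambda>t. r (c + (1-c)*t))"
  have "d (dconcat A B)" using dspace_concat[OF dsp] a b unfolding A_def B_def by simp
  define \<psi> where "\<psi> = (\<lambda>t::real. if t \<le> c then t/(2*c) else 1/2 + (t-c)/(2*(1-c)))"
  have cont: "continuous_on {0..1} \<psi>"
    unfolding \<psi>_def
  proof (rule continuous_on_cases_le[where h="\<lambda>t. t"])
    show "continuous_on {x \<in> {0..1}. x \<le> c} (\<lambda>t. t / (2 * c))"
      by (intro continuous_on_divide continuous_on_id continuous_on_const) (use c' in auto)
    show "continuous_on {x \<in> {0..1}. c \<le> x} (\<lambda>t. 1 / 2 + (t - c) / (2 * (1 - c)))"
      by (intro continuous_on_add continuous_on_divide continuous_on_diff continuous_on_id continuous_on_const) (use c' in auto)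
    show "continuous_on {0..1} (\<lambda>t. t)" by (rule continuous_on_id)
    fix x :: real assume "x = c"
    then show "x / (2 * c) = 1 / 2 + (x - c) / (2 * (1 - c))" using c' by simp
  qed
  have lo: "\<psi> t = t/(2*c) \<and> 0 \<le> \<psi> t \<and> \<psi> t \<le> 1/2" if "t \<in> {0..1}" "t \<le> c" for t
  proof -
    have e: "\<psi> t = t/(2*c)" by (simp only: \<psi>_def if_P[OF that(2)])
    show ?thesis using psi_facts(1)[OF c', of t] that e by auto
  qed
  have hi: "\<psi> t = 1/2 + (t-c)/(2*(1-c)) \<and> 1/2 < \<psi> t \<and> \<psi> t \<le> 1" if "t \<in> {0..1}" "c < t" for t
  proof -
    have e: "\<psi> t = 1/2 + (t-c)/(2*(1-c))" proof -
      have "\<not> t \<le> c" using that(2) by simp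
      then show ?thesis by (simp only: \<psi>_def if_not_P if_False)
    qed
    have h: "0 < (t-c)/(2*(1-c))" "(t-c)/(2*(1-c)) \<le> 1/2" using psi_facts(2)[OF c', of t] that by auto
    show ?thesis using e h by linarith
  qed
  have rng: "\<psi> t \<in> {0..1}" if "t \<in> {0..1}" for t
    using lo[OF that] hi[OF that] by (cases "t \<le> c") auto
  have mon: "mono_on {0..1} \<psi>"
  proof (rule mono_onI)
    fix x y :: real assume xy: "x \<in> {0..1}" "y \<in> {0..1}" "x \<le> y"
    show "\<psi> x \<le> \<psi> y"
    proof (cases "y \<le> c")
      case True
      then have "x \<le> c" using xy by simp
      then have "\<psi> x = x/(2*c)" "\<psi> y = y/(2*c)" using lo xy True by blast+
      then show ?thesis using xy c' by (simp add: divide_right_mono)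
    next
      case yc: False
      show ?thesis
      proof (cases "x \<le> c")
        case True
        then show ?thesis using lo[OF xy(1) True] hi[OF xy(2)] yc by auto
      next
        case False
        then have "\<psi> x = 1/2 + (x-c)/(2*(1-c))" "\<psi> y = 1/2 + (y-c)/(2*(1-c))" using hi xy yc by auto
        then show ?thesis using xy c' by (simp add: divide_right_mono)
      qed
    qed
  qed
  have "d (dconcat A B \<circ> \<psi>)"
    by (rule dspace_comp[OF dsp \<open>d (dconcat A B)\<close> cont]) (use rng mon in auto)
  then show "d r"
  proof (rule dspace_eq[OF dsp])
    fix t :: real assume t: "t \<in> {0..1}"
    show "r t = (dconcat A B \<circ> \<psi>) t"
    proof (cases "t \<le> c")
      case True
      then have "\<psi> t = t/(2*c)" "\<psi> t \<le> 1/2" using lo[OF t] by auto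
      then show ?thesis unfolding dconcat_def A_def using psi_facts(3)[OF c', of t] by simp
    next
      case False
      then have "c < t" by simp
      then have "\<psi> t = 1/2 + (t-c)/(2*(1-c))" "\<not> \<psi> t \<le> 1/2" using hi[OF t] by auto
      then show ?thesis unfolding dconcat_def B_def using psi_facts(4)[OF c', of t] by simp
    qed
  qed
qed


lemma subtop_le:
  "subtopology (top_of_set Q) {x. x \<in> topspace (top_of_set Q) \<and> P x} = top_of_set {x \<in> Q. P x}"
proof -
  have "Q \<inter> {x. x \<in> Q \<and> P x} = {x \<in> Q. P x}" by auto
  then show ?thesis by (simp add: subtopology_subtopology)
qed

lemma cm_piece:
  assumes "continuous_map (top_of_set ({0..1} \<times> {0..1::real})) Y (\<lambda>(t, s). G t s)"
    and "continuous_on T g" and "g ` T \<subseteq> {0..1} \<times> {0..1}"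
  shows "continuous_map (top_of_set T) Y (\<lambda>z. G (fst (g z)) (snd (g z)))"
proof -
  have "continuous_map (top_of_set T) (top_of_set ({0..1} \<times> {0..1::real})) g"
    using assms(2,3) by (auto simp: continuous_map_in_subtopology)
  from continuous_map_compose[OF this assms(1)] show ?thesis
    by (simp add: o_def case_prod_unfold)
qed

lemma dipath_in: "dipath d S p \<Longrightarrow> t \<in> {0..1} \<Longrightarrow> p t \<in> S"
  unfolding dipath_def by blast

lemma concat_homot:
  assumes dsp: "dspace X d" and h1: "dhomotopic X d S p p'" and h2: "dhomotopic X d S q q'"
    and e: "p 1 = q 0"
  shows "dhomotopic X d S (dconcat p q) (dconcat p' q')"
proof -
  obtain H1 where H1c: "continuous_map (top_of_set ({0..1} \<times> {0..1::real})) (subtopology X S) (\<lambda>(t, s). H1 t s)"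
    and H1: "\<And>u v. rp u \<Longrightarrow> rp v \<Longrightarrow> dipath d S (\<lambda>t. H1 (u t) (v t))"
    "\<And>t. t \<in> {0..1} \<Longrightarrow> H1 t 0 = p t" "\<And>t. t \<in> {0..1} \<Longrightarrow> H1 t 1 = p' t"
    "\<And>s. s \<in> {0..1} \<Longrightarrow> H1 0 s = p 0" "\<And>s. s \<in> {0..1} \<Longrightarrow> H1 1 s = p 1"
    by (rule dhomotopicE[OF h1]) blast
  obtain H2 where H2c: "continuous_map (top_of_set ({0..1} \<times> {0..1::real})) (subtopology X S) (\<lambda>(t, s). H2 t s)"
    and H2: "\<And>u v. rp u \<Longrightarrow> rp v \<Longrightarrow> dipath d S (\<lambda>t. H2 (u t) (v t))"
    "\<And>t. t \<in> {0..1} \<Longrightarrow> H2 t 0 = q t" "\<And>t. t \<in> {0..1} \<Longrightarrow> H2 t 1 = q' t"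
    "\<And>s. s \<in> {0..1} \<Longrightarrow> H2 0 s = q 0" "\<And>s. s \<in> {0..1} \<Longrightarrow> H2 1 s = q 1"
    by (rule dhomotopicE[OF h2]) blast
  have j: "H1 1 s = H2 0 s" if "s \<in> {0..1}" for s using H1(5)[OF that] H2(4)[OF that] e by simp
  define H where "H = (\<lambda>t s. if t \<le> 1/2 then H1 (2*t) s else H2 (2*t-1) s)"
  have inS1: "H1 a b \<in> S" if "a \<in> {0..1}" "b \<in> {0..1}" for a b
    using dipath_in[OF H1(1)[OF rp_const[OF that(1)] rp_const[OF that(2)]], of 0] by simp
  have inS2: "H2 a b \<in> S" if "a \<in> {0..1}" "b \<in> {0..1}" for a b
    using dipath_in[OF H2(1)[OF rp_const[OF that(1)] rp_const[OF that(2)]], of 0] by simp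
  have Hlo: "H a b = H1 (2*a) b" if "a \<le> 1/2" for a b unfolding H_def using that by simp
  have Hhi: "H a b = H2 (2*a - 1) b" if "1/2 \<le> a" "b \<in> {0..1}" for a b
  proof (cases "a = 1/2")
    case True
    then have "2*a = 1" "2*a - 1 = 0" by simp_all
    then show ?thesis unfolding H_def using j[OF that(2)] by simp
  next
    case False
    then show ?thesis unfolding H_def using that by simp
  qed
  show ?thesis
  proof (rule dhomotopicI[where H=H])
    let ?Q = "{0..1} \<times> {0..1::real}"
    have eq: "(\<lambda>(t, s). H t s) = (\<lambda>z::real\<times>real. if fst z \<le> 1/2 then H1 (2 * fst z) (snd z)
                  else H2 (2 * fst z - 1) (snd z))"
      unfolding H_def by (simp add: case_prod_unfold)
    have "continuous_map (top_of_set ?Q) (subtopology X S) (\<lambda>z::real\<times>real. if fst z \<le> 1/2 then H1 (2 * fst z) (snd z)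
                  else H2 (2 * fst z - 1) (snd z))"
    proof (rule continuous_map_cases_le)
      show "continuous_map (top_of_set ?Q) euclideanreal fst"
        by (simp add: continuous_on_fst[OF continuous_on_id])
      show "continuous_map (top_of_set ?Q) euclideanreal (\<lambda>x. 1/2)"
        by simp
      have "continuous_map (top_of_set {x \<in> ?Q. fst x \<le> 1/2}) (subtopology X S)
         (\<lambda>z::real\<times>real. H1 (2 * fst z) (snd z))"
      proof -
        have "continuous_map (top_of_set {x \<in> ?Q. fst x \<le> 1/2}) (subtopology X S)
         (\<lambda>z. H1 (fst ((\<lambda>z::real\<times>real. (2 * fst z, snd z)) z)) (snd ((\<lambda>z::real\<times>real. (2 * fst z, snd z)) z)))"
      proof (rule cm_piece[OF H1c])
        show "continuous_on {x \<in> ?Q. fst x \<le> 1 / 2} (\<lambda>z::real\<times>real. (2 * fst z, snd z))"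
          by (intro continuous_on_Pair continuous_on_mult continuous_on_const continuous_on_fst continuous_on_snd continuous_on_id)
        show "(\<lambda>z::real\<times>real. (2 * fst z, snd z)) ` {x \<in> ?Q. fst x \<le> 1 / 2} \<subseteq> ?Q" by auto
      qed
      then show ?thesis by simp
      qed
      then show "continuous_map (subtopology (top_of_set ?Q) {x. x \<in> topspace (top_of_set ?Q) \<and> fst x \<le> 1/2}) (subtopology X S)
         (\<lambda>z::real\<times>real. H1 (2 * fst z) (snd z))"
        by (simp only: subtop_le)
      have "continuous_map (top_of_set {x \<in> ?Q. 1/2 \<le> fst x}) (subtopology X S)
         (\<lambda>z::real\<times>real. H2 (2 * fst z - 1) (snd z))"
      proof -
        have "continuous_map (top_of_set {x \<in> ?Q. 1/2 \<le> fst x}) (subtopology X S)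
         (\<lambda>z. H2 (fst ((\<lambda>z::real\<times>real. (2 * fst z - 1, snd z)) z)) (snd ((\<lambda>z::real\<times>real. (2 * fst z - 1, snd z)) z)))"
      proof (rule cm_piece[OF H2c])
        show "continuous_on {x \<in> ?Q. 1/2 \<le> fst x} (\<lambda>z::real\<times>real. (2 * fst z - 1, snd z))"
          by (intro continuous_on_Pair continuous_on_diff continuous_on_mult continuous_on_const continuous_on_fst continuous_on_snd continuous_on_id)
        show "(\<lambda>z::real\<times>real. (2 * fst z - 1, snd z)) ` {x \<in> ?Q. 1/2 \<le> fst x} \<subseteq> ?Q" by auto
      qed
      then show ?thesis by simp
      qed
      then show "continuous_map (subtopology (top_of_set ?Q) {x. x \<in> topspace (top_of_set ?Q) \<and> 1/2 \<le> fst x}) (subtopology X S)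
         (\<lambda>z::real\<times>real. H2 (2 * fst z - 1) (snd z))"
        by (simp only: subtop_le)
      fix x :: "real \<times> real" assume "x \<in> topspace (top_of_set ?Q)" "fst x = 1/2"
      then show "H1 (2 * fst x) (snd x) = H2 (2 * fst x - 1) (snd x)"
      proof -
        have "2 * fst x = 1" "2 * fst x - 1 = 0" using \<open>fst x = 1/2\<close> by simp_all
        moreover have "snd x \<in> {0..1}" using \<open>x \<in> topspace (top_of_set ?Q)\<close> by (auto simp: mem_Times_iff)
        ultimately show ?thesis using j[of "snd x"] by simp
      qed
    qed
    then show "continuous_map (top_of_set ?Q) (subtopology X S) (\<lambda>(t, s). H t s)"
      by (simp only: eq)
  next
    fix u v :: "real \<Rightarrow> real" assume u: "rp u" and v: "rp v"
    let ?r = "\<lambda>t. H (u t) (v t)"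
    have p1: "dipath d S (\<lambda>t. H1 (2 * u' t) (v' t))" if "rp u'" "rp v'" "\<And>t. t \<in> {0..1} \<Longrightarrow> u' t \<le> 1/2" for u' v'
    proof -
      have "rp (\<lambda>t. 2 * u' t + 0)"
      proof (rule rp_scale[OF that(1)])
        fix t :: real assume t: "t \<in> {0..1}"
        show "2 * u' t + 0 \<in> {0..1}" using rp_in[OF that(1) t] that(3)[OF t] by auto
      qed simp
      from H1(1)[OF this that(2)] show ?thesis by simp
    qed
    have p2: "dipath d S (\<lambda>t. H2 (2 * u' t - 1) (v' t))" if "rp u'" "rp v'" "\<And>t. t \<in> {0..1} \<Longrightarrow> 1/2 \<le> u' t" for u' v'
    proof -
      have "rp (\<lambda>t. 2 * u' t + (-1))"
      proof (rule rp_scale[OF that(1)])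
        fix t :: real assume t: "t \<in> {0..1}"
        show "2 * u' t + (-1) \<in> {0..1}" using rp_in[OF that(1) t] that(3)[OF t] by auto
      qed simp
      from H2(1)[OF this that(2)] show ?thesis by simp
    qed
    have rS: "?r t \<in> S" if "t \<in> {0..1}" for t
    proof (cases "u t \<le> 1/2")
      case True
      then show ?thesis using Hlo[OF True] inS1 rp_in[OF u that] rp_in[OF v that] by auto
    next
      case False
      then show ?thesis using Hhi[of "u t" "v t"] inS2 rp_in[OF u that] rp_in[OF v that] by auto
    qed
    have "d ?r"
    proof (cases "u 1 \<le> 1/2")
      case True
      have le: "u t \<le> 1/2" if "t \<in> {0..1}" for t using rp_mono[OF u that, of 1] that True by auto
      have "dipath d S (\<lambda>t. H1 (2 * u t) (v t))" by (rule p1[OF u v le])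
      then have "dipath d S ?r" by (rule dipath_eqI[OF dsp]) (rule Hlo, erule le)
      then show ?thesis by (simp add: dipath_def)
    next
      case F1: False
      show ?thesis
      proof (cases "1/2 \<le> u 0")
        case True
        have ge: "1/2 \<le> u t" if "t \<in> {0..1}" for t using rp_mono[OF u _ that, of 0] that True by auto
        have "dipath d S (\<lambda>t. H2 (2 * u t - 1) (v t))" by (rule p2[OF u v ge])
        then have "dipath d S ?r" by (rule dipath_eqI[OF dsp]) (rule Hhi, erule ge, erule rp_in[OF v])
        then show ?thesis by (simp add: dipath_def)
      next
        case False
        obtain c where c: "0 \<le> c" "c \<le> 1" "u c = 1/2"
          using IVT'[of u 0 "1/2" 1] F1 False rp_cont[OF u] by auto
        have l1: "rp (\<lambda>t. c * t)" using rp_lin[of 0 c] c by simp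
        have l2: "rp (\<lambda>t. c + (1 - c) * t)" using rp_lin[of c 1] c by simp
        have ct: "c * t \<in> {0..1} \<and> c * t \<le> c" if "t \<in> {0..1}" for t
          using that c mult_left_le[of t c] by auto
        have ct2: "c + (1-c) * t \<in> {0..1} \<and> c \<le> c + (1-c) * t" if "t \<in> {0..1}" for t
          using rp_in[OF l2 that] that c by auto
        have le: "u (c * t) \<le> 1/2" if "t \<in> {0..1}" for t
          using rp_mono[OF u _ _ conjunct2[OF ct[OF that]]] ct[OF that] c by auto
        have ge: "1/2 \<le> u (c + (1-c) * t)" if "t \<in> {0..1}" for t
          using rp_mono[OF u _ _ conjunct2[OF ct2[OF that]]] ct2[OF that] c by auto
        have A: "dipath d S (\<lambda>t. H1 (2 * u (c*t)) (v (c*t)))"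
          by (rule p1[OF rp_comp[OF u l1] rp_comp[OF v l1] le])
        have B: "dipath d S (\<lambda>t. H2 (2 * u (c + (1-c)*t) - 1) (v (c + (1-c)*t)))"
          by (rule p2[OF rp_comp[OF u l2] rp_comp[OF v l2] ge])
        have A': "dipath d S (\<lambda>t. ?r (c*t))"
          by (rule dipath_eqI[OF dsp A]) (rule Hlo, erule le)
        have B': "dipath d S (\<lambda>t. ?r (c + (1-c)*t))"
          by (rule dipath_eqI[OF dsp B]) (rule Hhi, erule ge, rule rp_in[OF v], erule ct2[THEN conjunct1])
        show ?thesis by (rule glue[OF dsp c(1,2)]) (use A' B' in \<open>simp_all add: dipath_def\<close>)
      qed
    qed
    then show "dipath d S ?r" using rS unfolding dipath_def by blast
  next
    fix t :: real assume t: "t \<in> {0..1}"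
    show "H t 0 = dconcat p q t"
    proof (cases "t \<le> 1/2")
      case True then show ?thesis unfolding H_def dconcat_def using H1(2)[of "2*t"] t by auto
    next
      case False then show ?thesis unfolding H_def dconcat_def using H2(2)[of "2*t-1"] t by auto
    qed
    show "H t 1 = dconcat p' q' t"
    proof (cases "t \<le> 1/2")
      case True then show ?thesis unfolding H_def dconcat_def using H1(3)[of "2*t"] t by auto
    next
      case False then show ?thesis unfolding H_def dconcat_def using H2(3)[of "2*t-1"] t by auto
    qed
  next
    fix s :: real assume s: "s \<in> {0..1}"
    show "H 0 s = dconcat p q 0" unfolding H_def dconcat_def using H1(4)[OF s] by simp
    show "H 1 s = dconcat p q 1" unfolding H_def dconcat_def using H2(5)[OF s] by simp
  qed
qed

lemma equivclp_props:
  assumes dsp: "dspace X d" and eq: "equivclp (dhomotopic X d S) p y" and p: "dipath d S p"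
  shows "dipath d S y \<and> y 0 = p 0 \<and> y 1 = p 1"
  using eq
proof (induction rule: equivclp_induct)
  case base then show ?case using p by simp
next
  case (step y z)
  then show ?case using dhomot_props[OF dsp, of S y z] dhomot_props[OF dsp, of S z y] by auto
qed

lemma dipath_concat:
  assumes dsp: "dspace X d" and p: "dipath d S p" and q: "dipath d S q" and e: "p 1 = q 0"
  shows "dipath d S (dconcat p q)"
proof -
  have "d (dconcat p q)" using dspace_concat[OF dsp] p q e unfolding dipath_def by blast
  moreover have "dconcat p q t \<in> S" if "t \<in> {0..1}" for t
    using dipath_in[OF p, of "2*t"] dipath_in[OF q, of "2*t-1"] that unfolding dconcat_def by auto
  ultimately show ?thesis unfolding dipath_def by blast
qed

lemma concat_equiv_l:
  assumes dsp: "dspace X d" and eq: "equivclp (dhomotopic X d S) p p'" and p: "dipath d S p"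
    and q: "dipath d S q" and e: "p 1 = q 0"
  shows "equivclp (dhomotopic X d S) (dconcat p q) (dconcat p' q)"
  using eq
proof (induction rule: equivclp_induct)
  case base then show ?case by simp
next
  case (step y z)
  have y: "dipath d S y" "y 1 = p 1" using equivclp_props[OF dsp step(1) p] by auto
  from step(2) show ?case
  proof
    assume h: "dhomotopic X d S y z"
    have "dhomotopic X d S (dconcat y q) (dconcat z q)"
      by (rule concat_homot[OF dsp h dhomot_refl[OF dsp q]]) (use y e in simp)
    then show ?case using step(3) equivclp_into_equivclp by metis
  next
    assume h: "dhomotopic X d S z y"
    have "z 1 = y 1" using dhomot_props[OF dsp h] by simp
    have "dhomotopic X d S (dconcat z q) (dconcat y q)"
      by (rule concat_homot[OF dsp h dhomot_refl[OF dsp q]]) (use y e \<open>z 1 = y 1\<close> in simp)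
    then show ?case using step(3) equivclp_into_equivclp by metis
  qed
qed

lemma concat_equiv_r:
  assumes dsp: "dspace X d" and eq: "equivclp (dhomotopic X d S) q q'" and p: "dipath d S p"
    and q: "dipath d S q" and e: "p 1 = q 0"
  shows "equivclp (dhomotopic X d S) (dconcat p q) (dconcat p q')"
  using eq
proof (induction rule: equivclp_induct)
  case base then show ?case by simp
next
  case (step y z)
  have y: "dipath d S y" "y 0 = q 0" using equivclp_props[OF dsp step(1) q] by auto
  from step(2) show ?case
  proof
    assume h: "dhomotopic X d S y z"
    have "dhomotopic X d S (dconcat p y) (dconcat p z)"
      by (rule concat_homot[OF dsp dhomot_refl[OF dsp p] h]) (use y e in simp)
    then show ?case using step(3) equivclp_into_equivclp by metis
  next
    assume h: "dhomotopic X d S z y"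
    have "y 0 = z 0" using dhomot_props[OF dsp h] by simp
    have "dhomotopic X d S (dconcat p z) (dconcat p y)"
      by (rule concat_homot[OF dsp dhomot_refl[OF dsp p] h]) (use y e \<open>y 0 = z 0\<close> in simp)
    then show ?case using step(3) equivclp_into_equivclp by metis
  qed
qed

lemma dcomp_class:
  assumes dsp: "dspace X d" and p: "dipath d S p" and q: "dipath d S q" and e: "p 1 = q 0"
  shows "dcomp X d S (dclass X d S q) (dclass X d S p) = dclass X d S (dconcat p q)"
proof -
  have "dclass X d S (dconcat p' q') = dclass X d S (dconcat p q)"
    if p': "p' \<in> dclass X d S p" and q': "q' \<in> dclass X d S q" for p' q'
  proof -
    have P: "dipath d S p'" "p' 0 = p 0" "p' 1 = p 1" "equivclp (dhomotopic X d S) p p'" using dclass_mem[OF p'] by auto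
    have Q: "dipath d S q'" "q' 0 = q 0" "q' 1 = q 1" "equivclp (dhomotopic X d S) q q'" using dclass_mem[OF q'] by auto
    have "equivclp (dhomotopic X d S) (dconcat p q) (dconcat p' q)"
      by (rule concat_equiv_l[OF dsp P(4) p q e])
    moreover have "equivclp (dhomotopic X d S) (dconcat p' q) (dconcat p' q')"
      by (rule concat_equiv_r[OF dsp Q(4) P(1) q]) (use P e in simp)
    ultimately have E: "equivclp (dhomotopic X d S) (dconcat p q) (dconcat p' q')" by (rule equivclp_trans)
    show ?thesis
      by (rule dclass_eqI[OF dipath_concat[OF dsp P(1) Q(1)] dipath_concat[OF dsp p q e]])
         (use P Q e E equivclp_sym in \<open>auto simp: dconcat_def\<close>)
  qed
  moreover have "p \<in> dclass X d S p" "q \<in> dclass X d S q" using dclass_self p q by auto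
  ultimately show ?thesis unfolding dcomp_def by blast
qed

lemma dipath_topspace: "dspace X d \<Longrightarrow> dipath d S p \<Longrightarrow> t \<in> {0..1} \<Longrightarrow> p t \<in> topspace X"
  using dspace_cont[of X d p] unfolding dipath_def
  by (metis continuous_map_image_subset_topspace image_subset_iff topspace_euclidean_subtopology)

lemma dipath_const: "dspace X d \<Longrightarrow> a \<in> topspace X \<Longrightarrow> a \<in> S \<Longrightarrow> dipath d S (\<lambda>t. a)"
  unfolding dipath_def by (auto intro: dspace_const)

lemma dmorE:
  assumes "dmor X d S a b f"
  obtains p where "dipath d S p" "p 0 = a" "p 1 = b" "f = dclass X d S p"
  using assms unfolding dmor_def by blast

lemma dmorI: "dipath d S p \<Longrightarrow> dmor X d S (p 0) (p 1) (dclass X d S p)"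
  unfolding dmor_def by blast

lemma dmor_comp:
  assumes dsp: "dspace X d" and f: "dmor X d S a b f" and g: "dmor X d S b c g"
  shows "dmor X d S a c (dcomp X d S g f)"
proof -
  obtain p where p: "dipath d S p" "p 0 = a" "p 1 = b" "f = dclass X d S p" by (rule dmorE[OF f])
  obtain q where q: "dipath d S q" "q 0 = b" "q 1 = c" "g = dclass X d S q" by (rule dmorE[OF g])
  have "dcomp X d S g f = dclass X d S (dconcat p q)" using dcomp_class[OF dsp p(1) q(1)] p q by simp
  moreover have "dipath d S (dconcat p q)" using dipath_concat[OF dsp p(1) q(1)] p q by simp
  ultimately show ?thesis unfolding dmor_def using p q by (intro exI[of _ "dconcat p q"]) (simp add: dconcat_def)
qed

lemma rp_assoc: "rp (\<lambda>t. min (min (2*t) (t + 1/4)) ((t+1)/2))"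
  unfolding rp_def
proof (intro conjI)
  show "continuous_on {0..1} (\<lambda>t. min (min (2*t) (t + 1/4)) ((t+1)/2::real))"
    by (intro continuous_on_min continuous_on_mult continuous_on_add continuous_on_divide continuous_on_const continuous_on_id) auto
  show "(\<lambda>t. min (min (2*t) (t + 1/4)) ((t+1)/2::real)) ` {0..1} \<subseteq> {0..1}"
    by (auto simp: min_def)
  show "mono_on {0..1} (\<lambda>t. min (min (2*t) (t + 1/4)) ((t+1)/2::real))"
    by (rule mono_onI) (intro min.mono; simp)
qed

lemma concat_assoc_eq:
  "dconcat (dconcat p q) r = (\<lambda>t. dconcat p (dconcat q r) (min (min (2*t) (t + 1/4)) ((t+1)/2)))"
proof (rule ext)
  fix t :: real
  consider "t \<le> 1/4" | "1/4 < t" "t \<le> 1/2" | "1/2 < t" by linarith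
  then show "dconcat (dconcat p q) r t = dconcat p (dconcat q r) (min (min (2*t) (t + 1/4)) ((t+1)/2))"
  proof cases
    case 1
    then have "min (min (2*t) (t + 1/4)) ((t+1)/2) = 2*t" by (simp add: min_def)
    then show ?thesis using 1 unfolding dconcat_def by simp
  next
    case 2
    then have "min (min (2*t) (t + 1/4)) ((t+1)/2) = t + 1/4" by (simp add: min_def)
    moreover have "2 * (t + 1/4) - 1 = 2*t - 1/2" "2 * (2*t - 1/2) = 2 * (2 * t) - 1" by simp_all
    ultimately show ?thesis using 2 unfolding dconcat_def by simp
  next
    case 3
    then have "min (min (2*t) (t + 1/4)) ((t+1)/2) = (t+1)/2" by (simp add: min_def)
    moreover have a3: "2 * ((t+1)/2) - 1 = t" by (simp add: field_simps)
    moreover have a1: "\<not> t \<le> 1/2" "\<not> (t+1)/2 \<le> 1/2" using 3 by simp_all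
    ultimately show ?thesis unfolding dconcat_def by (simp only: a1 a3 if_False)
  qed
qed

lemma dcomp_assoc:
  assumes dsp: "dspace X d" and f: "dmor X d S a b f" and g: "dmor X d S b c g" and h: "dmor X d S c e h"
  shows "dcomp X d S h (dcomp X d S g f) = dcomp X d S (dcomp X d S h g) f"
proof -
  obtain p where p: "dipath d S p" "p 0 = a" "p 1 = b" "f = dclass X d S p" by (rule dmorE[OF f])
  obtain q where q: "dipath d S q" "q 0 = b" "q 1 = c" "g = dclass X d S q" by (rule dmorE[OF g])
  obtain r where r: "dipath d S r" "r 0 = c" "r 1 = e" "h = dclass X d S r" by (rule dmorE[OF h])
  have pq: "dipath d S (dconcat p q)" using dipath_concat[OF dsp p(1) q(1)] p q by simp
  have qr: "dipath d S (dconcat q r)" using dipath_concat[OF dsp q(1) r(1)] q r by simp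
  have L: "dcomp X d S h (dcomp X d S g f) = dclass X d S (dconcat (dconcat p q) r)"
    using dcomp_class[OF dsp p(1) q(1)] dcomp_class[OF dsp pq r(1)] p q r by (simp add: dconcat_def)
  have R: "dcomp X d S (dcomp X d S h g) f = dclass X d S (dconcat p (dconcat q r))"
    using dcomp_class[OF dsp q(1) r(1)] dcomp_class[OF dsp p(1) qr] p q r by (simp add: dconcat_def)
  have pqr: "dipath d S (dconcat p (dconcat q r))" using dipath_concat[OF dsp p(1) qr] p q r by (simp add: dconcat_def)
  have "dclass X d S (\<lambda>t. dconcat p (dconcat q r) (min (min (2*t) (t + 1/4)) ((t+1)/2)))
      = dclass X d S (\<lambda>t. dconcat p (dconcat q r) t)"
    by (rule reparam_class[OF dsp pqr rp_assoc rp_id]) simp_all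
  then show ?thesis using L R concat_assoc_eq[of p q r] by simp
qed

lemma rp_idl: "rp (\<lambda>t. max 0 (2*t - 1))"
  unfolding rp_def
proof (intro conjI)
  show "continuous_on {0..1} (\<lambda>t. max 0 (2*t - 1::real))"
    by (intro continuous_on_max continuous_on_mult continuous_on_diff continuous_on_const continuous_on_id)
  show "(\<lambda>t. max 0 (2*t - 1::real)) ` {0..1} \<subseteq> {0..1}" by (auto simp: max_def)
  show "mono_on {0..1} (\<lambda>t. max 0 (2*t - 1::real))" by (rule mono_onI) (intro max.mono; simp)
qed

lemma rp_idr: "rp (\<lambda>t. min 1 (2*t))"
  unfolding rp_def
proof (intro conjI)
  show "continuous_on {0..1} (\<lambda>t. min 1 (2*t::real))"
    by (intro continuous_on_min continuous_on_mult continuous_on_const continuous_on_id)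
  show "(\<lambda>t. min 1 (2*t::real)) ` {0..1} \<subseteq> {0..1}" by (auto simp: min_def)
  show "mono_on {0..1} (\<lambda>t. min 1 (2*t::real))" by (rule mono_onI) (intro min.mono; simp)
qed

lemma dcomp_id_left:
  assumes dsp: "dspace X d" and f: "dmor X d S a b f"
  shows "dcomp X d S (did X d S b) f = f"
proof -
  obtain p where p: "dipath d S p" "p 0 = a" "p 1 = b" "f = dclass X d S p" by (rule dmorE[OF f])
  have b: "dipath d S (\<lambda>t. b)" using dipath_const[OF dsp dipath_topspace[OF dsp p(1), of 1] dipath_in[OF p(1), of 1]] p by simp
  have "dcomp X d S (did X d S b) f = dclass X d S (dconcat p (\<lambda>t. b))"
    unfolding did_def using dcomp_class[OF dsp p(1) b] p by simp
  also have "dconcat p (\<lambda>t. b) = (\<lambda>t. p (min 1 (2*t)))"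
  proof (rule ext)
    fix t :: real
    show "dconcat p (\<lambda>t. b) t = p (min 1 (2*t))"
    proof (cases "t \<le> 1/2")
      case True
      then have "min 1 (2*t) = 2*t" by simp
      then show ?thesis unfolding dconcat_def using True by simp
    next
      case False
      then have "min 1 (2*t) = 1" by simp
      then show ?thesis unfolding dconcat_def using False p by simp
    qed
  qed
  also have "dclass X d S (\<lambda>t. p (min 1 (2*t))) = dclass X d S (\<lambda>t. p t)"
    by (rule reparam_class[OF dsp p(1) rp_idr rp_id]) simp_all
  finally show ?thesis using p by simp
qed

lemma dcomp_id_right:
  assumes dsp: "dspace X d" and f: "dmor X d S a b f"
  shows "dcomp X d S f (did X d S a) = f"
proof -
  obtain p where p: "dipath d S p" "p 0 = a" "p 1 = b" "f = dclass X d S p" by (rule dmorE[OF f])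
  have a: "dipath d S (\<lambda>t. a)" using dipath_const[OF dsp dipath_topspace[OF dsp p(1), of 0] dipath_in[OF p(1), of 0]] p by simp
  have "dcomp X d S f (did X d S a) = dclass X d S (dconcat (\<lambda>t. a) p)"
    unfolding did_def using dcomp_class[OF dsp a p(1)] p by simp
  also have "dconcat (\<lambda>t. a) p = (\<lambda>t. p (max 0 (2*t - 1)))"
  proof (rule ext)
    fix t :: real
    show "dconcat (\<lambda>t. a) p t = p (max 0 (2*t - 1))"
    proof (cases "t \<le> 1/2")
      case True
      then have "max 0 (2*t - 1) = 0" by simp
      then show ?thesis unfolding dconcat_def using True p by simp
    next
      case False
      then have "max 0 (2*t - 1) = 2*t - 1" by simp
      then show ?thesis unfolding dconcat_def using False by simp
    qed
  qed
  also have "dclass X d S (\<lambda>t. p (max 0 (2*t - 1))) = dclass X d S (\<lambda>t. p t)"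
    by (rule reparam_class[OF dsp p(1) rp_idl rp_id]) simp_all
  finally show ?thesis using p by simp
qed

lemma dipath_mono: "dipath d S p \<Longrightarrow> S \<subseteq> Y \<Longrightarrow> dipath d Y p"
  unfolding dipath_def by blast

lemma dhomot_mono:
  assumes h: "dhomotopic X d S p q" and SY: "S \<subseteq> Y"
  shows "dhomotopic X d Y p q"
proof -
  obtain H where Hc: "continuous_map (top_of_set ({0..1} \<times> {0..1::real})) (subtopology X S) (\<lambda>(t, s). H t s)"
    and H: "\<And>u v. rp u \<Longrightarrow> rp v \<Longrightarrow> dipath d S (\<lambda>t. H (u t) (v t))"
    "\<And>t. t \<in> {0..1} \<Longrightarrow> H t 0 = p t" "\<And>t. t \<in> {0..1} \<Longrightarrow> H t 1 = q t"
    "\<And>s. s \<in> {0..1} \<Longrightarrow> H 0 s = p 0" "\<And>s. s \<in> {0..1} \<Longrightarrow> H 1 s = p 1"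
    by (rule dhomotopicE[OF h]) blast
  show ?thesis
  proof (rule dhomotopicI[where H=H])
    show "continuous_map (top_of_set ({0..1} \<times> {0..1::real})) (subtopology X Y) (\<lambda>(t, s). H t s)"
      using Hc SY unfolding continuous_map_in_subtopology by blast
    fix u v :: "real \<Rightarrow> real" assume "rp u" "rp v"
    then show "dipath d Y (\<lambda>t. H (u t) (v t))" using H(1) SY dipath_mono by blast
  qed (use H in auto)
qed

lemma equivclp_mono':
  assumes "equivclp r a b" and "\<And>x y. r x y \<Longrightarrow> s x y"
  shows "equivclp s a b"
  using assms(1)
proof (induction rule: equivclp_induct)
  case base then show ?case by simp
next
  case (step y z)
  then show ?case using assms(2) equivclp_into_equivclp by metis
qed

lemma dclass_sub: "S \<subseteq> Y \<Longrightarrow> q \<in> dclass X d S p \<Longrightarrow> q \<in> dclass X d Y p"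
  unfolding dclass_def using dipath_mono equivclp_mono'[of "dhomotopic X d S" p q "dhomotopic X d Y"] dhomot_mono
  by blast

lemma dincl_class:
  assumes SY: "S \<subseteq> Y" and p: "dipath d S p"
  shows "dincl X d Y (dclass X d S p) = dclass X d Y p"
proof -
  have "dclass X d Y q = dclass X d Y p" if "q \<in> dclass X d S p" for q
    using dclass_mem_eq[OF dclass_sub[OF SY that]] .
  moreover have "p \<in> dclass X d S p" by (rule dclass_self[OF p])
  ultimately show ?thesis unfolding dincl_def by blast
qed

lemma dmor_incl:
  assumes SY: "S \<subseteq> Y" and f: "dmor X d S a b f"
  shows "dmor X d Y a b (dincl X d Y f)"
proof -
  obtain p where p: "dipath d S p" "p 0 = a" "p 1 = b" "f = dclass X d S p" by (rule dmorE[OF f])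
  show ?thesis unfolding dmor_def
    using dincl_class[OF SY p(1)] p dipath_mono[OF p(1) SY] by auto
qed

lemma dincl_comp:
  assumes dsp: "dspace X d" and SY: "S \<subseteq> Y" and f: "dmor X d S a b f" and g: "dmor X d S b c g"
  shows "dincl X d Y (dcomp X d S g f) = dcomp X d Y (dincl X d Y g) (dincl X d Y f)"
proof -
  obtain p where p: "dipath d S p" "p 0 = a" "p 1 = b" "f = dclass X d S p" by (rule dmorE[OF f])
  obtain q where q: "dipath d S q" "q 0 = b" "q 1 = c" "g = dclass X d S q" by (rule dmorE[OF g])
  have pq: "dipath d S (dconcat p q)" using dipath_concat[OF dsp p(1) q(1)] p q by simp
  have "dincl X d Y (dcomp X d S g f) = dclass X d Y (dconcat p q)"
    using dcomp_class[OF dsp p(1) q(1)] p q dincl_class[OF SY pq] by simp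
  moreover have "dcomp X d Y (dincl X d Y g) (dincl X d Y f) = dclass X d Y (dconcat p q)"
    using dincl_class[OF SY p(1)] dincl_class[OF SY q(1)] p q
      dcomp_class[OF dsp dipath_mono[OF p(1) SY] dipath_mono[OF q(1) SY]] by simp
  ultimately show ?thesis by simp
qed

lemma dincl_did:
  assumes dsp: "dspace X d" and SY: "S \<subseteq> Y" and a: "a \<in> S" "a \<in> topspace X"
  shows "dincl X d Y (did X d S a) = did X d Y a"
  unfolding did_def by (rule dincl_class[OF SY dipath_const[OF dsp a(2) a(1)]])

lemma dincl_incl:
  assumes SY: "S \<subseteq> Y" and YZ: "Y \<subseteq> Z" and f: "dmor X d S a b f"
  shows "dincl X d Z (dincl X d Y f) = dincl X d Z f"
proof -
  obtain p where p: "dipath d S p" "p 0 = a" "p 1 = b" "f = dclass X d S p" by (rule dmorE[OF f])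
  show ?thesis using dincl_class[OF SY p(1)] dincl_class[OF order_trans[OF SY YZ] p(1)]
      dincl_class[OF YZ dipath_mono[OF p(1) SY]] p by simp
qed

definition sub :: "(real \<Rightarrow> 'a) \<Rightarrow> real \<Rightarrow> real \<Rightarrow> real \<Rightarrow> 'a" where
  "sub g a b = (\<lambda>t. g (a + (b - a) * t))"

lemma sub_dipath:
  assumes dsp: "dspace X d" and g: "dipath d S g" and T: "g ` {a..b} \<subseteq> T" and ab: "0 \<le> a" "a \<le> b" "b \<le> 1"
  shows "dipath d T (sub g a b)"
proof -
  have r: "rp (\<lambda>t. a + (b - a) * t)" by (rule rp_lin[OF ab])
  have "dipath d S (sub g a b)" unfolding sub_def by (rule dipath_comp[OF dsp g r])
  moreover have "sub g a b t \<in> T" if "t \<in> {0..1}" for t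
  proof -
    have "(b-a)*t \<le> (b-a)*1" using that ab by (intro mult_left_mono) auto
    moreover have "0 \<le> (b-a)*t" using that ab by auto
    ultimately have "a + (b - a) * t \<in> {a..b}" by auto
    then show ?thesis using T unfolding sub_def by blast
  qed
  ultimately show ?thesis unfolding dipath_def by blast
qed

lemma sub_ends: "sub g a b 0 = g a" "sub g a b 1 = g b"
  unfolding sub_def by simp_all

lemma rp_split:
  assumes ab: "0 \<le> a" "a \<le> b" "b \<le> c" "c \<le> (1::real)"
  shows "rp (\<lambda>t. a + (b-a) * min 1 (2*t) + (c-b) * max 0 (2*t-1))"
  unfolding rp_def
proof (intro conjI)
  show "continuous_on {0..1} (\<lambda>t. a + (b-a) * min 1 (2*t) + (c-b) * max 0 (2*t-1))"
    by (intro continuous_on_add continuous_on_mult continuous_on_min continuous_on_max continuous_on_diff continuous_on_const continuous_on_id)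
  show "(\<lambda>t. a + (b-a) * min 1 (2*t) + (c-b) * max 0 (2*t-1)) ` {0..1} \<subseteq> {0..1}"
  proof (rule image_subsetI)
    fix t :: real assume t: "t \<in> {0..1}"
    have m1: "0 \<le> min 1 (2*t)" "min 1 (2*t) \<le> 1" using t by auto
    have m2: "0 \<le> max 0 (2*t-1)" "max 0 (2*t-1) \<le> 1" using t by auto
    have "(b-a) * min 1 (2*t) \<le> (b-a)*1" using m1 ab by (intro mult_left_mono) auto
    moreover have "(c-b) * max 0 (2*t-1) \<le> (c-b)*1" using m2 ab by (intro mult_left_mono) auto
    moreover have "0 \<le> (b-a) * min 1 (2*t)" "0 \<le> (c-b) * max 0 (2*t-1)" using m1 m2 ab by auto
    ultimately show "a + (b-a) * min 1 (2*t) + (c-b) * max 0 (2*t-1) \<in> {0..1}" using ab by auto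
  qed
  show "mono_on {0..1} (\<lambda>t. a + (b-a) * min 1 (2*t) + (c-b) * max 0 (2*t-1))"
  proof (rule mono_onI)
    fix x y :: real assume "x \<in> {0..1}" "y \<in> {0..1}" "x \<le> y"
    then have "min 1 (2*x) \<le> min 1 (2*y)" "max 0 (2*x-1) \<le> max 0 (2*y-1)" by auto
    then have "(b-a) * min 1 (2*x) \<le> (b-a) * min 1 (2*y)" "(c-b) * max 0 (2*x-1) \<le> (c-b) * max 0 (2*y-1)"
      using ab by (auto intro: mult_left_mono)
    then show "a + (b-a) * min 1 (2*x) + (c-b) * max 0 (2*x-1) \<le> a + (b-a) * min 1 (2*y) + (c-b) * max 0 (2*y-1)"
      by linarith
  qed
qed

lemma sub_split_eq:
  "dconcat (sub g a b) (sub g b c) = (\<lambda>t. g (a + (b-a) * min 1 (2*t) + (c-b) * max 0 (2*t-1)))"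
proof (rule ext)
  fix t :: real
  show "dconcat (sub g a b) (sub g b c) t = g (a + (b-a) * min 1 (2*t) + (c-b) * max 0 (2*t-1))"
  proof (cases "t \<le> 1/2")
    case True
    then have "min 1 (2*t) = 2*t" "max 0 (2*t-1) = 0" by simp_all
    then show ?thesis unfolding dconcat_def sub_def using True by simp
  next
    case False
    then have "min 1 (2*t) = 1" "max 0 (2*t-1) = 2*t-1" by simp_all
    moreover have "a + (b-a) * 1 + (c-b) * (2*t-1) = b + (c-b) * (2*t-1)" by simp
    ultimately show ?thesis unfolding dconcat_def sub_def using False by simp
  qed
qed

lemma sub_split:
  assumes dsp: "dspace X d" and g: "dipath d S g" and ab: "0 \<le> a" "a \<le> b" "b \<le> c" "c \<le> 1"
  shows "dcomp X d S (dclass X d S (sub g b c)) (dclass X d S (sub g a b)) = dclass X d S (sub g a c)"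
proof -
  have s1: "dipath d S (sub g a b)" by (rule sub_dipath[OF dsp g _ ab(1,2)]) (use g ab in \<open>auto simp: dipath_def\<close>)
  have s2: "dipath d S (sub g b c)" by (rule sub_dipath[OF dsp g _ _ ab(3,4)]) (use g ab in \<open>auto simp: dipath_def\<close>)
  have "dcomp X d S (dclass X d S (sub g b c)) (dclass X d S (sub g a b)) = dclass X d S (dconcat (sub g a b) (sub g b c))"
    by (rule dcomp_class[OF dsp s1 s2]) (simp add: sub_ends)
  also have "\<dots> = dclass X d S (\<lambda>t. g (a + (b-a) * min 1 (2*t) + (c-b) * max 0 (2*t-1)))"
    by (simp only: sub_split_eq)
  also have "\<dots> = dclass X d S (\<lambda>t. g (a + (c - a) * t))"
    by (rule reparam_class[OF dsp g rp_split[OF ab] rp_lin]) (use ab in simp_all)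
  finally show ?thesis unfolding sub_def .
qed

lemma dfD:
  assumes "dfunctor X d S1 T1 S2 T2 Fo Fm"
  shows "x \<in> T1 \<Longrightarrow> Fo x \<in> T2"
    and "x \<in> T1 \<Longrightarrow> y \<in> T1 \<Longrightarrow> dmor X d S1 x y f \<Longrightarrow> dmor X d S2 (Fo x) (Fo y) (Fm f)"
    and "x \<in> T1 \<Longrightarrow> Fm (did X d S1 x) = did X d S2 (Fo x)"
    and "x \<in> T1 \<Longrightarrow> y \<in> T1 \<Longrightarrow> z \<in> T1 \<Longrightarrow> dmor X d S1 x y f \<Longrightarrow> dmor X d S1 y z g \<Longrightarrow>
         Fm (dcomp X d S1 g f) = dcomp X d S2 (Fm g) (Fm f)"
  using assms unfolding dfunctor_def by simp_all

lemma frD: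
  assumes "future_retract X d S A B Po Pm eta"
  shows "A \<subseteq> B" "B \<subseteq> S" "dfunctor X d S B S A Po Pm"
    and "x \<in> B \<Longrightarrow> dmor X d S x (Po x) (eta x)"
    and "x \<in> B \<Longrightarrow> y \<in> B \<Longrightarrow> dmor X d S x y f \<Longrightarrow> dcomp X d S (eta y) f = dcomp X d S (Pm f) (eta x)"
    and "a \<in> A \<Longrightarrow> eta a = did X d S a"
  using assms unfolding future_retract_def by simp_all

lemma did_dmor_eq:
  assumes dsp: "dspace X d" and a: "a \<in> topspace X" "a \<in> S" and m: "dmor X d S a b (did X d S a)"
  shows "b = a"
proof -
  obtain p where p: "dipath d S p" "p 0 = a" "p 1 = b" "did X d S a = dclass X d S p" by (rule dmorE[OF m])
  have "p \<in> dclass X d S (\<lambda>t. a)" using dclass_self[OF p(1)] p(4) unfolding did_def by simp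
  then show ?thesis using dclass_mem p by fastforce
qed

lemma did_dmor: "dspace X d \<Longrightarrow> a \<in> topspace X \<Longrightarrow> a \<in> S \<Longrightarrow> dmor X d S a a (did X d S a)"
  unfolding did_def using dmorI[OF dipath_const, of X d a S] by simp

theorem lemma4p7:
  fixes TX :: "'a topology" and d :: "(real \<Rightarrow> 'a) \<Rightarrow> bool"
    and Xs As Bs :: "nat \<Rightarrow> 'a set"
    and Qo :: "nat \<Rightarrow> 'a \<Rightarrow> 'a" and Qm :: "nat \<Rightarrow> (real \<Rightarrow> 'a) set \<Rightarrow> (real \<Rightarrow> 'a) set"
    and theta :: "nat \<Rightarrow> 'a \<Rightarrow> (real \<Rightarrow> 'a) set"
    and Po :: "nat \<Rightarrow> 'a \<Rightarrow> 'a" and Pm :: "nat \<Rightarrow> (real \<Rightarrow> 'a) set \<Rightarrow> (real \<Rightarrow> 'a) set"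
    and eta :: "nat \<Rightarrow> 'a \<Rightarrow> (real \<Rightarrow> 'a) set"
    and PPo :: "'a \<Rightarrow> 'a" and PPm :: "(real \<Rightarrow> 'a) set \<Rightarrow> (real \<Rightarrow> 'a) set"
    and A B :: "'a set"
  assumes dsp: "dspace TX d"
    and X12: "Xs 1 \<subseteq> topspace TX" "Xs 2 \<subseteq> topspace TX"
    and Xcov: "topspace TX = (TX interior_of Xs 1) \<union> (TX interior_of Xs 2)"
    and Xdip: "\<And>p. d p \<Longrightarrow> (\<exists>n::nat. \<exists>t::nat \<Rightarrow> real. t 0 = 0 \<and> t n = 1 \<and>
                  (\<forall>i<n. t i \<le> t (Suc i)) \<and>
                  (\<forall>i<n. p ` {t i..t (Suc i)} \<subseteq> Xs 1 \<or> p ` {t i..t (Suc i)} \<subseteq> Xs 2))"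
    and X0: "Xs 0 = Xs 1 \<inter> Xs 2"
    and AB: "\<And>k. k \<in> {0,1,2} \<Longrightarrow> As k \<subseteq> Bs k \<and> Bs k \<subseteq> Xs k"
    and A0: "As 0 = As 1 \<inter> As 2" and B0: "Bs 0 = Bs 1 \<inter> Bs 2"
    and Adef: "A = As 1 \<union> As 2" and Bdef: "B = Bs 1 \<union> Bs 2"
    and Acov: "A = (subtopology TX A interior_of As 1) \<union> (subtopology TX A interior_of As 2)"
    and Bcov: "B = (subtopology TX B interior_of Bs 1) \<union> (subtopology TX B interior_of Bs 2)"
    \<comment> \<open>compatible future retracts Q_k : pi_1(X_k) -> pi_1(X_k, B_k)\<close>
    and Qfr: "\<And>k. k \<in> {0,1,2} \<Longrightarrow> future_retract TX d (Xs k) (Bs k) (Xs k) (Qo k) (Qm k) (theta k)"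
    and Qobj: "\<And>k x. k \<in> {1,2} \<Longrightarrow> x \<in> Xs 0 \<Longrightarrow> Qo k x = Qo 0 x"
    and Qmor: "\<And>k x y f. k \<in> {1,2} \<Longrightarrow> x \<in> Xs 0 \<Longrightarrow> y \<in> Xs 0 \<Longrightarrow> dmor TX d (Xs 0) x y f \<Longrightarrow>
                 Qm k (dincl TX d (Xs k) f) = dincl TX d (Xs k) (Qm 0 f)"
    and Qunit: "\<And>k x. k \<in> {1,2} \<Longrightarrow> x \<in> Xs 0 \<Longrightarrow> theta k x = dincl TX d (Xs k) (theta 0 x)"
    \<comment> \<open>compatible future retracts P_k : pi_1(X_k, B_k) -> pi_1(X_k, A_k)\<close>
    and Pfr: "\<And>k. k \<in> {0,1,2} \<Longrightarrow> future_retract TX d (Xs k) (As k) (Bs k) (Po k) (Pm k) (eta k)"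
    and Pobj: "\<And>k x. k \<in> {1,2} \<Longrightarrow> x \<in> Bs 0 \<Longrightarrow> Po k x = Po 0 x"
    and Pmor: "\<And>k x y f. k \<in> {1,2} \<Longrightarrow> x \<in> Bs 0 \<Longrightarrow> y \<in> Bs 0 \<Longrightarrow> dmor TX d (Xs 0) x y f \<Longrightarrow>
                 Pm k (dincl TX d (Xs k) f) = dincl TX d (Xs k) (Pm 0 f)"
    and Punit: "\<And>k x. k \<in> {1,2} \<Longrightarrow> x \<in> Bs 0 \<Longrightarrow> eta k x = dincl TX d (Xs k) (eta 0 x)"
    \<comment> \<open>the (unique) functor P : pi_1(X, B) -> pi_1(X, A) with P o j_k = j'_k o P_k\<close>
    and PP: "dfunctor TX d (topspace TX) B (topspace TX) A PPo PPm"
    and PPobj: "\<And>k x. k \<in> {1,2} \<Longrightarrow> x \<in> Bs k \<Longrightarrow> PPo x = Po k x"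
    and PPmor: "\<And>k x y f. k \<in> {1,2} \<Longrightarrow> x \<in> Bs k \<Longrightarrow> y \<in> Bs k \<Longrightarrow> dmor TX d (Xs k) x y f \<Longrightarrow>
                 PPm (dincl TX d (topspace TX) f) = dincl TX d (topspace TX) (Pm k f)"
  shows "\<forall>k\<in>{1,2}. \<forall>l\<in>{1,2}. \<forall>x\<in>Bs k. \<forall>y\<in>Bs l. \<forall>f. dmor TX d (topspace TX) x y f \<longrightarrow>
           dcomp TX d (topspace TX) (dincl TX d (topspace TX) (eta l y)) f
             = dcomp TX d (topspace TX) (PPm f) (dincl TX d (topspace TX) (eta k x))"
proof -
  let ?T = "topspace TX"
  have X0k: "Xs 0 \<subseteq> Xs k" if "k \<in> {1,2}" for k using that X0 by auto
  have XkT: "Xs k \<subseteq> ?T" if "k \<in> {1,2}" for k using that X12 by auto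
  have X0T: "Xs 0 \<subseteq> ?T" using X0 X12 by auto
  have BkX: "Bs k \<subseteq> Xs k" if "k \<in> {0,1,2}" for k using AB[OF that] by blast
  have BT: "B \<subseteq> ?T" using Bdef BkX[of 1] BkX[of 2] X12 by auto
  have Bk: "Bs k \<subseteq> B" if "k \<in> {1,2}" for k using that Bdef by auto
  have Qin: "Qo k x \<in> Bs k" if "k \<in> {0,1,2}" "x \<in> Xs k" for k x
    using dfD(1)[OF frD(3)[OF Qfr[OF that(1)]] that(2)] .
  have Qf: "dmor TX d (Xs k) (Qo k x) (Qo k y) (Qm k g)"
    if "k \<in> {0,1,2}" "x \<in> Xs k" "y \<in> Xs k" "dmor TX d (Xs k) x y g" for k x y g
    using dfD(2)[OF frD(3)[OF Qfr[OF that(1)]] that(2,3,4)] .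
  have Qth: "dmor TX d (Xs k) x (Qo k x) (theta k x)" if "k \<in> {0,1,2}" "x \<in> Xs k" for k x
    using frD(4)[OF Qfr[OF that(1)] that(2)] .
  have Qnat: "dcomp TX d (Xs k) (theta k y) g = dcomp TX d (Xs k) (Qm k g) (theta k x)"
    if "k \<in> {0,1,2}" "x \<in> Xs k" "y \<in> Xs k" "dmor TX d (Xs k) x y g" for k x y g
    using frD(5)[OF Qfr[OF that(1)] that(2,3,4)] .
  have Qid: "theta k x = did TX d (Xs k) x" if "k \<in> {0,1,2}" "x \<in> Bs k" for k x
    using frD(6)[OF Qfr[OF that(1)] that(2)] .
  have Pf: "dmor TX d (Xs k) (Po k x) (Po k y) (Pm k g)"
    if "k \<in> {0,1,2}" "x \<in> Bs k" "y \<in> Bs k" "dmor TX d (Xs k) x y g" for k x y g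
    using dfD(2)[OF frD(3)[OF Pfr[OF that(1)]] that(2,3,4)] .
  have Peta: "dmor TX d (Xs k) x (Po k x) (eta k x)" if "k \<in> {0,1,2}" "x \<in> Bs k" for k x
    using frD(4)[OF Pfr[OF that(1)] that(2)] .
  have Pnat: "dcomp TX d (Xs k) (eta k y) g = dcomp TX d (Xs k) (Pm k g) (eta k x)"
    if "k \<in> {0,1,2}" "x \<in> Bs k" "y \<in> Bs k" "dmor TX d (Xs k) x y g" for k x y g
    using frD(5)[OF Pfr[OF that(1)] that(2,3,4)] .
  have PPf: "dmor TX d ?T (PPo x) (PPo y) (PPm g)" if "x \<in> B" "y \<in> B" "dmor TX d ?T x y g" for x y g
    using dfD(2)[OF PP that] .
  have PPid: "PPm (did TX d ?T x) = did TX d ?T (PPo x)" if "x \<in> B" for x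
    using dfD(3)[OF PP that] .
  have PPc: "PPm (dcomp TX d ?T g f) = dcomp TX d ?T (PPm g) (PPm f)"
    if "x \<in> B" "y \<in> B" "z \<in> B" "dmor TX d ?T x y f" "dmor TX d ?T y z g" for x y z f g
    using dfD(4)[OF PP that] .
  have BX: "y \<in> Bs k" if k: "k \<in> {1,2}" and y: "y \<in> B" "y \<in> Xs k" for k y
  proof (rule ccontr)
    assume nk: "y \<notin> Bs k"
    obtain k' where k': "k' \<in> {1,2}" "y \<in> Bs k'" using y Bdef by auto
    have y0: "y \<in> Xs 0" using k k' nk BkX[of k'] X0 y by auto
    have k'3: "k' \<in> {0,1,2}" using k' by auto
    have th: "theta k' y = did TX d (Xs k') y" by (rule Qid[OF k'3 k'(2)])
    obtain p where p: "dipath d (Xs 0) p" "p 0 = y" "p 1 = Qo 0 y" "theta 0 y = dclass TX d (Xs 0) p"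
      by (rule dmorE[OF Qth[of 0 y]]) (use y0 in auto)
    have "theta k' y = dclass TX d (Xs k') p"
      using Qunit[OF k'(1) y0] dincl_class[OF X0k[OF k'(1)] p(1)] p(4) by simp
    then have e: "dclass TX d (Xs k') p = did TX d (Xs k') y" using th by simp
    have "dmor TX d (Xs k') (p 0) (p 1) (dclass TX d (Xs k') p)"
      by (rule dmorI[OF dipath_mono[OF p(1) X0k[OF k'(1)]]])
    then have "dmor TX d (Xs k') y (Qo 0 y) (did TX d (Xs k') y)" using e p by simp
    moreover have "y \<in> ?T" "y \<in> Xs k'" using y0 X0T X0k[OF k'(1)] by auto
    ultimately have "Qo 0 y = y" using did_dmor_eq[OF dsp] by blast
    then have "y \<in> Bs 0" using Qin[of 0 y] y0 by simp
    then show False using nk B0 k by auto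
  qed
  have eta0: "dincl TX d ?T (eta j x) = dincl TX d ?T (eta 0 x)" if "j \<in> {1,2}" "x \<in> Bs 0" for j x
  proof -
    have m: "dmor TX d (Xs 0) x (Po 0 x) (eta 0 x)" by (rule Peta) (use that in auto)
    show ?thesis using Punit[OF that] dincl_incl[OF X0k[OF that(1)] XkT[OF that(1)] m] by simp
  qed
  have etacons: "dincl TX d ?T (eta k x) = dincl TX d ?T (eta l x) \<and> Po k x = Po l x"
    if "k \<in> {1,2}" "l \<in> {1,2}" "x \<in> Bs k" "x \<in> Bs l" for k l x
  proof (cases "k = l")
    case True then show ?thesis by simp
  next
    case False
    then have x0: "x \<in> Bs 0" using that B0 by auto
    show ?thesis using eta0[OF that(1) x0] eta0[OF that(2) x0] Pobj[OF that(1) x0] Pobj[OF that(2) x0] by simp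
  qed
  have theta0: "dincl TX d ?T (theta j x) = dincl TX d ?T (theta 0 x)" if "j \<in> {1,2}" "x \<in> Xs 0" for j x
  proof -
    have m: "dmor TX d (Xs 0) x (Qo 0 x) (theta 0 x)" by (rule Qth) (use that in auto)
    show ?thesis using Qunit[OF that] dincl_incl[OF X0k[OF that(1)] XkT[OF that(1)] m] by simp
  qed
  define good where "good = (\<lambda>x w h. x \<in> B \<and> w \<in> B \<and> dmor TX d ?T x w h \<and>
     (\<forall>k\<in>{1,2}. \<forall>l\<in>{1,2}. x \<in> Bs k \<longrightarrow> w \<in> Bs l \<longrightarrow>
        dcomp TX d ?T (dincl TX d ?T (eta l w)) h = dcomp TX d ?T (PPm h) (dincl TX d ?T (eta k x))))"
  have good_base: "good x x (did TX d ?T x)" if x: "x \<in> B" for x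
  proof -
    have xT: "x \<in> ?T" using x BT by auto
    have "dcomp TX d ?T (dincl TX d ?T (eta l x)) (did TX d ?T x) = dcomp TX d ?T (PPm (did TX d ?T x)) (dincl TX d ?T (eta k x))"
      if k: "k \<in> {1,2}" and l: "l \<in> {1,2}" and xk: "x \<in> Bs k" and xl: "x \<in> Bs l" for k l
    proof -
      have e: "dincl TX d ?T (eta l x) = dincl TX d ?T (eta k x)" using etacons[OF l k xl xk] by simp
      have m: "dmor TX d ?T x (Po k x) (dincl TX d ?T (eta k x))"
        by (rule dmor_incl[OF XkT[OF k] Peta]) (use k xk in auto)
      have "PPm (did TX d ?T x) = did TX d ?T (Po k x)" using PPid[OF x] PPobj[OF k xk] by simp
      then show ?thesis using e dcomp_id_right[OF dsp m] dcomp_id_left[OF dsp m] by simp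
    qed
    then show ?thesis unfolding good_def using x did_dmor[OF dsp xT xT] by blast
  qed
  have good_step: "good x w' (dcomp TX d ?T (dincl TX d ?T g) h)"
    if gd: "good x w h" and k: "k \<in> {1,2}" and w: "w \<in> Bs k" and w': "w' \<in> Bs k"
      and g: "dmor TX d (Xs k) w w' g" for x w w' h k g
  proof -
    have k3: "k \<in> {0,1,2}" using k by auto
    have x: "x \<in> B" and hm: "dmor TX d ?T x w h"
      and hn: "\<And>k l. k \<in> {1,2} \<Longrightarrow> l \<in> {1,2} \<Longrightarrow> x \<in> Bs k \<Longrightarrow> w \<in> Bs l \<Longrightarrow>
        dcomp TX d ?T (dincl TX d ?T (eta l w)) h = dcomp TX d ?T (PPm h) (dincl TX d ?T (eta k x))"
      using gd unfolding good_def by auto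
    have wB: "w \<in> B" "w' \<in> B" using w w' Bk[OF k] by auto
    have gm: "dmor TX d ?T w w' (dincl TX d ?T g)" by (rule dmor_incl[OF XkT[OF k] g])
    have hm': "dmor TX d ?T x w' (dcomp TX d ?T (dincl TX d ?T g) h)" by (rule dmor_comp[OF dsp hm gm])
    have "dcomp TX d ?T (dincl TX d ?T (eta l w')) (dcomp TX d ?T (dincl TX d ?T g) h)
        = dcomp TX d ?T (PPm (dcomp TX d ?T (dincl TX d ?T g) h)) (dincl TX d ?T (eta k1 x))"
      if k1: "k1 \<in> {1,2}" and l: "l \<in> {1,2}" and xk: "x \<in> Bs k1" and wl: "w' \<in> Bs l" for k1 l
    proof -
      have e1: "dincl TX d ?T (eta l w') = dincl TX d ?T (eta k w')" using etacons[OF l k wl w'] by simp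
      have ew': "dmor TX d (Xs k) w' (Po k w') (eta k w')" by (rule Peta[OF k3 w'])
      have ew: "dmor TX d (Xs k) w (Po k w) (eta k w)" by (rule Peta[OF k3 w])
      have pg: "dmor TX d (Xs k) (Po k w) (Po k w') (Pm k g)" by (rule Pf[OF k3 w w' g])
      have ex: "dmor TX d ?T x (Po k1 x) (dincl TX d ?T (eta k1 x))"
        by (rule dmor_incl[OF XkT[OF k1] Peta]) (use k1 xk in auto)
      have ppm: "dmor TX d ?T (Po k1 x) (Po k w) (PPm h)"
        using PPf[OF x wB(1) hm] PPobj[OF k1 xk] PPobj[OF k w] by simp
      have ew'T: "dmor TX d ?T w' (Po k w') (dincl TX d ?T (eta k w'))" by (rule dmor_incl[OF XkT[OF k] ew'])
      have ewT: "dmor TX d ?T w (Po k w) (dincl TX d ?T (eta k w))" by (rule dmor_incl[OF XkT[OF k] ew])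
      have pgT: "dmor TX d ?T (Po k w) (Po k w') (dincl TX d ?T (Pm k g))" by (rule dmor_incl[OF XkT[OF k] pg])
      have "dcomp TX d ?T (dincl TX d ?T (eta l w')) (dcomp TX d ?T (dincl TX d ?T g) h)
          = dcomp TX d ?T (dcomp TX d ?T (dincl TX d ?T (eta k w')) (dincl TX d ?T g)) h"
        using e1 dcomp_assoc[OF dsp hm gm ew'T] by simp
      also have "dcomp TX d ?T (dincl TX d ?T (eta k w')) (dincl TX d ?T g)
          = dincl TX d ?T (dcomp TX d (Xs k) (eta k w') g)"
        using dincl_comp[OF dsp XkT[OF k] g ew'] by simp
      also have "\<dots> = dincl TX d ?T (dcomp TX d (Xs k) (Pm k g) (eta k w))"
        using Pnat[OF k3 w w' g] by simp
      also have "\<dots> = dcomp TX d ?T (dincl TX d ?T (Pm k g)) (dincl TX d ?T (eta k w))"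
        by (rule dincl_comp[OF dsp XkT[OF k] ew pg])
      also have "dcomp TX d ?T (dcomp TX d ?T (dincl TX d ?T (Pm k g)) (dincl TX d ?T (eta k w))) h
          = dcomp TX d ?T (dincl TX d ?T (Pm k g)) (dcomp TX d ?T (dincl TX d ?T (eta k w)) h)"
        using dcomp_assoc[OF dsp hm ewT pgT] by simp
      also have "dcomp TX d ?T (dincl TX d ?T (eta k w)) h = dcomp TX d ?T (PPm h) (dincl TX d ?T (eta k1 x))"
        by (rule hn[OF k1 k xk w])
      also have "dcomp TX d ?T (dincl TX d ?T (Pm k g)) (dcomp TX d ?T (PPm h) (dincl TX d ?T (eta k1 x)))
          = dcomp TX d ?T (dcomp TX d ?T (dincl TX d ?T (Pm k g)) (PPm h)) (dincl TX d ?T (eta k1 x))"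
        by (rule dcomp_assoc[OF dsp ex ppm pgT])
      also have "dcomp TX d ?T (dincl TX d ?T (Pm k g)) (PPm h) = PPm (dcomp TX d ?T (dincl TX d ?T g) h)"
        using PPc[OF x wB(1) wB(2) hm gm] PPmor[OF k w w' g] by simp
      finally show ?thesis .
    qed
    then show ?thesis unfolding good_def using x wB(2) hm' by blast
  qed
  have all_good: "good x y f" if x: "x \<in> B" and y: "y \<in> B" and f: "dmor TX d ?T x y f" for x y f
  proof -
    obtain \<gamma> where g: "dipath d ?T \<gamma>" "\<gamma> 0 = x" "\<gamma> 1 = y" "f = dclass TX d ?T \<gamma>" by (rule dmorE[OF f])
    have "d \<gamma>" using g(1) unfolding dipath_def by blast
    from Xdip[OF this] obtain n and t :: "nat \<Rightarrow> real" where t0: "t 0 = 0" and tn: "t n = 1"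
      and tm: "\<forall>i<n. t i \<le> t (Suc i)"
      and pc: "\<forall>i<n. \<gamma> ` {t i..t (Suc i)} \<subseteq> Xs 1 \<or> \<gamma> ` {t i..t (Suc i)} \<subseteq> Xs 2" by blast
    have tmono: "t i \<le> t (i + j)" if "i + j \<le> n" for i j
      using that
    proof (induction j)
      case 0 then show ?case by simp
    next
      case (Suc j)
      then have "t i \<le> t (i + j)" by simp
      moreover have "t (i + j) \<le> t (Suc (i + j))" using tm Suc.prems by auto
      ultimately show ?case by simp
    qed
    have t01: "t i \<in> {0..1}" if "i \<le> n" for i
      using tmono[of 0 i] tmono[of i "n - i"] that t0 tn by auto
    have n0: "0 < n" using t0 tn by (cases n) auto
    have kind: "\<exists>k\<in>{1,2}. \<gamma> ` {t i..t (Suc i)} \<subseteq> Xs k" if "i < n" for i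
      using pc that by auto
    have zin: "\<gamma> (t i) \<in> \<gamma> ` {t i..t (Suc i)}" "\<gamma> (t (Suc i)) \<in> \<gamma> ` {t i..t (Suc i)}" if "i < n" for i
      using tm that by auto
    have P: "\<exists>w h. good x w h \<and> (\<forall>k\<in>{1,2}. \<gamma> (t m) \<in> Xs k \<longrightarrow>
        Qo k (\<gamma> (t m)) = w \<and>
        dcomp TX d ?T (dincl TX d ?T (theta k (\<gamma> (t m)))) (dclass TX d ?T (sub \<gamma> 0 (t m))) = h)"
      if "m \<le> n" for m
      using that
    proof (induction m)
      case 0
      have xT: "x \<in> ?T" using x BT by auto
      have "Qo k x = x \<and> dcomp TX d ?T (dincl TX d ?T (theta k x)) (dclass TX d ?T (sub \<gamma> 0 0)) = did TX d ?T x"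
        if k: "k \<in> {1,2}" and xk: "x \<in> Xs k" for k
      proof -
        have k3: "k \<in> {0,1,2}" using k by auto
        have xb: "x \<in> Bs k" by (rule BX[OF k x xk])
        have th: "theta k x = did TX d (Xs k) x" by (rule Qid[OF k3 xb])
        have "dmor TX d (Xs k) x (Qo k x) (did TX d (Xs k) x)" using Qth[OF k3 xk] th by simp
        then have q: "Qo k x = x" by (rule did_dmor_eq[OF dsp xT xk])
        have i: "dincl TX d ?T (theta k x) = did TX d ?T x" using th dincl_did[OF dsp XkT[OF k] xk xT] by simp
        have s: "dclass TX d ?T (sub \<gamma> 0 0) = did TX d ?T x" unfolding sub_def did_def using g(2) by simp
        show ?thesis using q i s dcomp_id_left[OF dsp did_dmor[OF dsp xT xT]] by simp
      qed
      then show ?case using good_base[OF x] t0 g(2) by auto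
    next
      case (Suc m)
      then have mn: "m < n" and mn': "m \<le> n" by auto
      obtain w h where wh: "good x w h" and Pm': "\<And>k. k \<in> {1,2} \<Longrightarrow> \<gamma> (t m) \<in> Xs k \<Longrightarrow>
        Qo k (\<gamma> (t m)) = w \<and>
        dcomp TX d ?T (dincl TX d ?T (theta k (\<gamma> (t m)))) (dclass TX d ?T (sub \<gamma> 0 (t m))) = h"
        using Suc.IH[OF mn'] by blast
      obtain k where k: "k \<in> {1,2}" and pk: "\<gamma> ` {t m..t (Suc m)} \<subseteq> Xs k" using kind[OF mn] by blast
      have k3: "k \<in> {0,1,2}" using k by auto
      let ?z = "\<gamma> (t m)" and ?z' = "\<gamma> (t (Suc m))"
      have z: "?z \<in> Xs k" and z': "?z' \<in> Xs k" using zin[OF mn] pk by auto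
      have ta: "0 \<le> t m" "t m \<le> t (Suc m)" "t (Suc m) \<le> 1" using t01[OF mn'] t01[OF Suc.prems] tm mn by auto
      have sd: "dipath d (Xs k) (sub \<gamma> (t m) (t (Suc m)))" by (rule sub_dipath[OF dsp g(1) pk ta])
      define gg where "gg = dclass TX d (Xs k) (sub \<gamma> (t m) (t (Suc m)))"
      have ggm: "dmor TX d (Xs k) ?z ?z' gg" unfolding gg_def using dmorI[OF sd] by (simp add: sub_ends)
      have Pmk: "Qo k ?z = w" "dcomp TX d ?T (dincl TX d ?T (theta k ?z)) (dclass TX d ?T (sub \<gamma> 0 (t m))) = h"
        using Pm'[OF k z] by auto
      define q where "q = Qm k gg"
      have qm: "dmor TX d (Xs k) w (Qo k ?z') q" unfolding q_def using Qf[OF k3 z z' ggm] Pmk(1) by simp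
      have wk: "w \<in> Bs k" using Qin[OF k3 z] Pmk(1) by simp
      have w'k: "Qo k ?z' \<in> Bs k" using Qin[OF k3 z'] .
      have good': "good x (Qo k ?z') (dcomp TX d ?T (dincl TX d ?T q) h)"
        by (rule good_step[OF wh k wk w'k qm])
      have main: "dcomp TX d ?T (dincl TX d ?T (theta k ?z')) (dclass TX d ?T (sub \<gamma> 0 (t (Suc m))))
          = dcomp TX d ?T (dincl TX d ?T q) h"
      proof -
        have s0d: "dipath d ?T (sub \<gamma> 0 (t m))" by (rule sub_dipath[OF dsp g(1)]) (use g(1) ta in \<open>auto simp: dipath_def\<close>)
        have s0m: "dmor TX d ?T x ?z (dclass TX d ?T (sub \<gamma> 0 (t m)))"
          using dmorI[OF s0d] g(2) by (simp add: sub_ends)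
        have gT: "dmor TX d ?T ?z ?z' (dincl TX d ?T gg)" by (rule dmor_incl[OF XkT[OF k] ggm])
        have thz: "dmor TX d (Xs k) ?z (Qo k ?z) (theta k ?z)" by (rule Qth[OF k3 z])
        have thz': "dmor TX d (Xs k) ?z' (Qo k ?z') (theta k ?z')" by (rule Qth[OF k3 z'])
        have thz'T: "dmor TX d ?T ?z' (Qo k ?z') (dincl TX d ?T (theta k ?z'))" by (rule dmor_incl[OF XkT[OF k] thz'])
        have thzT: "dmor TX d ?T ?z (Qo k ?z) (dincl TX d ?T (theta k ?z))" by (rule dmor_incl[OF XkT[OF k] thz])
        have qmT: "dmor TX d ?T (Qo k ?z) (Qo k ?z') (dincl TX d ?T q)" using dmor_incl[OF XkT[OF k] qm] Pmk(1) by simp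
        have qm': "dmor TX d (Xs k) (Qo k ?z) (Qo k ?z') q" using qm Pmk(1) by simp
        have split: "dclass TX d ?T (sub \<gamma> 0 (t (Suc m))) = dcomp TX d ?T (dincl TX d ?T gg) (dclass TX d ?T (sub \<gamma> 0 (t m)))"
          using sub_split[OF dsp g(1) _ ta(1) ta(2) ta(3)] dincl_class[OF XkT[OF k] sd] unfolding gg_def by simp
        have "dcomp TX d ?T (dincl TX d ?T (theta k ?z')) (dclass TX d ?T (sub \<gamma> 0 (t (Suc m))))
            = dcomp TX d ?T (dcomp TX d ?T (dincl TX d ?T (theta k ?z')) (dincl TX d ?T gg)) (dclass TX d ?T (sub \<gamma> 0 (t m)))"
          using split dcomp_assoc[OF dsp s0m gT thz'T] by simp
        also have "dcomp TX d ?T (dincl TX d ?T (theta k ?z')) (dincl TX d ?T gg) = dincl TX d ?T (dcomp TX d (Xs k) (theta k ?z') gg)"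
          using dincl_comp[OF dsp XkT[OF k] ggm thz'] by simp
        also have "\<dots> = dincl TX d ?T (dcomp TX d (Xs k) q (theta k ?z))"
          using Qnat[OF k3 z z' ggm] unfolding q_def by simp
        also have "\<dots> = dcomp TX d ?T (dincl TX d ?T q) (dincl TX d ?T (theta k ?z))"
          by (rule dincl_comp[OF dsp XkT[OF k] thz qm'])
        also have "dcomp TX d ?T (dcomp TX d ?T (dincl TX d ?T q) (dincl TX d ?T (theta k ?z))) (dclass TX d ?T (sub \<gamma> 0 (t m)))
            = dcomp TX d ?T (dincl TX d ?T q) (dcomp TX d ?T (dincl TX d ?T (theta k ?z)) (dclass TX d ?T (sub \<gamma> 0 (t m))))"
          using dcomp_assoc[OF dsp s0m thzT qmT] by simp
        also have "\<dots> = dcomp TX d ?T (dincl TX d ?T q) h" using Pmk(2) by simp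
        finally show ?thesis .
      qed
      have other: "Qo k' ?z' = Qo k ?z' \<and> dincl TX d ?T (theta k' ?z') = dincl TX d ?T (theta k ?z')"
        if k': "k' \<in> {1,2}" and zk': "?z' \<in> Xs k'" for k'
      proof (cases "k' = k")
        case True then show ?thesis by simp
      next
        case False
        then have z0: "?z' \<in> Xs 0" using k k' z' zk' X0 by auto
        show ?thesis using Qobj[OF k' z0] Qobj[OF k z0] theta0[OF k' z0] theta0[OF k z0] by simp
      qed
      show ?case using good' main other by metis
    qed
    obtain w h where wh: "good x w h" and Pn: "\<And>k. k \<in> {1,2} \<Longrightarrow> \<gamma> (t n) \<in> Xs k \<Longrightarrow>
        Qo k (\<gamma> (t n)) = w \<and>
        dcomp TX d ?T (dincl TX d ?T (theta k (\<gamma> (t n)))) (dclass TX d ?T (sub \<gamma> 0 (t n))) = h"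
      using P[of n] by blast
    have n1: "n - 1 < n" "Suc (n - 1) = n" using n0 by auto
    obtain k where k: "k \<in> {1,2}" and pk: "\<gamma> ` {t (n-1)..t (Suc (n-1))} \<subseteq> Xs k" using kind[OF n1(1)] by blast
    have yk: "y \<in> Xs k" using zin(2)[OF n1(1)] pk n1(2) tn g(3) by auto
    have k3: "k \<in> {0,1,2}" using k by auto
    have yT: "y \<in> ?T" using y BT by auto
    have yb: "y \<in> Bs k" by (rule BX[OF k y yk])
    have th: "theta k y = did TX d (Xs k) y" by (rule Qid[OF k3 yb])
    have "dmor TX d (Xs k) y (Qo k y) (did TX d (Xs k) y)" using Qth[OF k3 yk] th by simp
    then have q: "Qo k y = y" by (rule did_dmor_eq[OF dsp yT yk])
    have i: "dincl TX d ?T (theta k y) = did TX d ?T y" using th dincl_did[OF dsp XkT[OF k] yk yT] by simp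
    have s: "sub \<gamma> 0 1 = \<gamma>" unfolding sub_def by simp
    have "w = y" and "h = dcomp TX d ?T (did TX d ?T y) f"
      using Pn[OF k] yk tn g(3) q i s g(4) by auto
    then have "h = f" using dcomp_id_left[OF dsp f] by simp
    then show ?thesis using wh \<open>w = y\<close> by simp
  qed
  show ?thesis
  proof (intro ballI allI impI)
    fix k l x y f
    assume k: "k \<in> {1,2}" and l: "l \<in> {1,2}" and x: "x \<in> Bs k" and y: "y \<in> Bs l"
      and f: "dmor TX d ?T x y f"
    have "good x y f" by (rule all_good[OF _ _ f]) (use x y Bk[OF k] Bk[OF l] in auto)
    then show "dcomp TX d ?T (dincl TX d ?T (eta l y)) f = dcomp TX d ?T (PPm f) (dincl TX d ?T (eta k x))"
      unfolding good_def using k l x y by blast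
  qed
qed

end
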